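(* Let $m\ge1$, let $k_1,k_2\ge1$ be integers and $r_1,r_2>0$ with $r_1^2+r_2^2=1$. Let $F_1:\mathbb{R}^{m+1}\to\mathbb{R}^{n_1+1}$ and $F_2:\mathbb{R}^{m+1}\to\mathbb{R}^{n_2+1}$ be forms of degrees $k_1$, $k_2$ with $|F_i(\bar x)|^2=r_i^2|\bar x|^{2k_i}$, each of minimal degree in its class, whose restrictions $\varphi_1:\mathbb{S}^m\to\mathbb{S}^{n_1}(r_1)$ and $\varphi_2:\mathbb{S}^m\to\mathbb{S}^{n_2}(r_2)$ are harmonic. Let $\varphi=\iota\circ(\varphi_1,\varphi_2):\mathbb{S}^m\to\mathbb{S}^{n_1+n_2+1}$, where $\iota$ is the canonical inclusion of $\mathbb{S}^{n_1}(r_1)\times\mathbb{S}^{n_2}(r_2)$ into $\mathbb{S}^{n_1+n_2+1}$. Then $\varphi$ is harmonic if and only if $k_1=k_2$.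
   Context: A form of degree $k$ is a map all of whose components are homogeneous polynomials of degree $k$. A form $F$ of degree $k$ is of minimal degree in its class if there is no form $G$ of degree strictly smaller than $k$ with $G|_{\mathbb{S}^m}=F|_{\mathbb{S}^m}$. $\mathbb{S}^n(r)$ is the sphere of radius $r$ centred at $0$, $\mathbb{S}^m$ the unit sphere. Harmonic means vanishing tension field. *)

theory Defs
  imports "HOL-Analysis.Analysis"
begin

definition monomials :: "nat \<Rightarrow> ('a::euclidean_space \<Rightarrow> nat) set" where
  "monomials k = {\<alpha>. (\<forall>b. b \<notin> Basis \<longrightarrow> \<alpha> b = 0) \<and> (\<Sum>b\<in>Basis. \<alpha> b) = k}"

definition monomial :: "('a::euclidean_space \<Rightarrow> nat) \<Rightarrow> 'a \<Rightarrow> real" where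
  "monomial \<alpha> x = (\<Prod>b\<in>Basis. (x \<bullet> b) ^ (\<alpha> b))"

definition homogeneous_poly :: "nat \<Rightarrow> ('a::euclidean_space \<Rightarrow> real) \<Rightarrow> bool" where
  "homogeneous_poly k p \<longleftrightarrow>
     (\<exists>c. \<forall>x. p x = (\<Sum>\<alpha>\<in>monomials k. c \<alpha> * monomial \<alpha> x))"

definition is_form :: "nat \<Rightarrow> ('a::euclidean_space \<Rightarrow> 'b::euclidean_space) \<Rightarrow> bool" where
  "is_form k F \<longleftrightarrow> (\<forall>b\<in>Basis. homogeneous_poly k (\<lambda>x. F x \<bullet> b))"

definition minimal_degree_form :: "nat \<Rightarrow> ('a::euclidean_space \<Rightarrow> 'b::euclidean_space) \<Rightarrow> bool" where
  "minimal_degree_form k F \<longleftrightarrow> is_form k F \<and>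
     \<not> (\<exists>j<k. \<exists>G :: 'a \<Rightarrow> 'b. is_form j G \<and> (\<forall>x\<in>sphere 0 1. G x = F x))"

definition tangent_onb :: "'a::euclidean_space \<Rightarrow> 'a set \<Rightarrow> bool" where
  "tangent_onb x B \<longleftrightarrow> finite B \<and> pairwise orthogonal B \<and> (\<forall>v\<in>B. norm v = 1)
      \<and> span B = {v. v \<bullet> x = 0}"

text \<open>Second covariant derivative of f at x in direction e (e a unit tangent vector):
  second derivative of f along the unit-speed great circle (geodesic) through x with velocity e.\<close>
definition geodesic_second_deriv ::
    "('a::euclidean_space \<Rightarrow> 'b::real_normed_vector) \<Rightarrow> 'a \<Rightarrow> 'a \<Rightarrow> 'b" where
  "geodesic_second_deriv f x e =
     vector_derivative
       (\<lambda>s. vector_derivative (\<lambda>t. f (cos t *\<^sub>R x + sin t *\<^sub>R e)) (at s)) (at 0)"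

text \<open>Laplace--Beltrami operator of the round unit sphere (trace of the Hessian),
  applied componentwise to a vector-valued map; only values of f on the sphere matter.\<close>
definition sphere_laplacian ::
    "('a::euclidean_space \<Rightarrow> 'b::real_normed_vector) \<Rightarrow> 'a \<Rightarrow> 'b" where
  "sphere_laplacian f x = (\<Sum>e\<in>(SOME B. tangent_onb x B). geodesic_second_deriv f x e)"

text \<open>Tension field of a map from the unit sphere into the sphere of radius r of a
  Euclidean space (isometrically embedded): tangential part of the Laplacian.\<close>
definition tension_field ::
    "('a::euclidean_space \<Rightarrow> 'b::euclidean_space) \<Rightarrow> 'a \<Rightarrow> 'b" where
  "tension_field f x = (let v = sphere_laplacian f x; y = f x in v - ((v \<bullet> y) / (y \<bullet> y)) *\<^sub>R y)"

definition harmonic_sphere_map ::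
    "real \<Rightarrow> ('a::euclidean_space \<Rightarrow> 'b::euclidean_space) \<Rightarrow> bool" where
  "harmonic_sphere_map r f \<longleftrightarrow>
     (\<forall>x\<in>sphere 0 1. f x \<in> sphere 0 r) \<and> (\<forall>x\<in>sphere 0 1. tension_field f x = 0)"

end

theory Submission
  imports Defs "HOL-Computational_Algebra.Polynomial"
begin

lemma finite_monomials: "finite (monomials k :: ('a::euclidean_space \<Rightarrow> nat) set)"
proof -
  have "monomials k \<subseteq> {\<alpha>::'a\<Rightarrow>nat. \<forall>b. (b \<in> Basis \<longrightarrow> \<alpha> b \<in> {0..k}) \<and> (b \<notin> Basis \<longrightarrow> \<alpha> b = 0)}"
    unfolding monomials_def
  proof safe
    fix \<alpha> :: "'a \<Rightarrow> nat" and b :: 'a assume "\<forall>b. b \<notin> Basis \<longrightarrow> \<alpha> b = 0" "b\<in>Basis"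
    then show "\<alpha> b \<in> {0..sum \<alpha> Basis}" using member_le_sum[of b Basis \<alpha>] by auto
  next
    fix \<alpha> :: "'a \<Rightarrow> nat" and b :: 'a assume "\<forall>b. b \<notin> Basis \<longrightarrow> \<alpha> b = 0" "b \<notin> Basis"
    then show "\<alpha> b = 0" by blast
  qed
  moreover have "finite {\<alpha>::'a\<Rightarrow>nat. \<forall>b. (b \<in> Basis \<longrightarrow> \<alpha> b \<in> {0..k}) \<and> (b \<notin> Basis \<longrightarrow> \<alpha> b = 0)}"
    by (rule finite_set_of_finite_funs) auto
  ultimately show ?thesis by (rule finite_subset)
qed

lemma hp_cong: "homogeneous_poly k f \<Longrightarrow> (\<And>x. g x = f x) \<Longrightarrow> homogeneous_poly k g"
  unfolding homogeneous_poly_def by metis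

lemma hp_zero: "homogeneous_poly k (\<lambda>x. 0)"
  unfolding homogeneous_poly_def by (rule exI[of _ "\<lambda>_. 0"]) simp

lemma hp_add: "homogeneous_poly k f \<Longrightarrow> homogeneous_poly k g \<Longrightarrow> homogeneous_poly k (\<lambda>x. f x + g x)"
  unfolding homogeneous_poly_def
proof (elim exE)
  fix c d assume "\<forall>x. f x = (\<Sum>\<alpha>\<in>monomials k. c \<alpha> * monomial \<alpha> x)" "\<forall>x. g x = (\<Sum>\<alpha>\<in>monomials k. d \<alpha> * monomial \<alpha> x)"
  then show "\<exists>c. \<forall>x. f x + g x = (\<Sum>\<alpha>\<in>monomials k. c \<alpha> * monomial \<alpha> x)"
    by (intro exI[of _ "\<lambda>\<alpha>. c \<alpha> + d \<alpha>"]) (simp add: sum.distrib algebra_simps)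
qed

lemma hp_scale: "homogeneous_poly k f \<Longrightarrow> homogeneous_poly k (\<lambda>x. a * f x)"
  unfolding homogeneous_poly_def
proof (elim exE)
  fix c assume "\<forall>x. f x = (\<Sum>\<alpha>\<in>monomials k. c \<alpha> * monomial \<alpha> x)"
  then show "\<exists>c. \<forall>x. a * f x = (\<Sum>\<alpha>\<in>monomials k. c \<alpha> * monomial \<alpha> x)"
    by (intro exI[of _ "\<lambda>\<alpha>. a * c \<alpha>"]) (simp add: sum_distrib_left algebra_simps)
qed

lemma hp_mon: "\<alpha> \<in> monomials k \<Longrightarrow> homogeneous_poly k (monomial \<alpha>)"
  unfolding homogeneous_poly_def
proof (intro exI[of _ "\<lambda>\<beta>. if \<beta> = \<alpha> then 1 else 0"] allI)
  fix x assume a: "\<alpha> \<in> monomials k"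
  have "(\<Sum>\<beta>\<in>monomials k. (if \<beta> = \<alpha> then 1 else 0) * monomial \<beta> x) = (\<Sum>\<beta>\<in>monomials k. if \<beta> = \<alpha> then monomial \<beta> x else 0)"
    by (rule sum.cong) auto
  also have "\<dots> = monomial \<alpha> x" using a by (simp add: finite_monomials)
  finally show "monomial \<alpha> x = (\<Sum>\<beta>\<in>monomials k. (if \<beta> = \<alpha> then 1 else 0) * monomial \<beta> x)" by simp
qed

lemma hp_sum: "finite I \<Longrightarrow> (\<And>i. i \<in> I \<Longrightarrow> homogeneous_poly k (f i)) \<Longrightarrow> homogeneous_poly k (\<lambda>x. \<Sum>i\<in>I. f i x)"
proof (induction I rule: finite_induct)
  case empty then show ?case by (simp add: hp_zero)
next
  case (insert i I) then show ?case by (simp add: hp_add)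
qed

lemma monomial_scale: "monomial \<alpha> (t *\<^sub>R x) = t ^ (\<Sum>b\<in>Basis. \<alpha> b) * monomial \<alpha> x"
  unfolding monomial_def by (simp add: power_mult_distrib prod.distrib power_sum)

lemma hp_homog: "homogeneous_poly k f \<Longrightarrow> f (t *\<^sub>R x) = t ^ k * f x"
  unfolding homogeneous_poly_def
proof (elim exE)
  fix c assume c: "\<forall>x. f x = (\<Sum>\<alpha>\<in>monomials k. c \<alpha> * monomial \<alpha> x)"
  have "f (t *\<^sub>R x) = (\<Sum>\<alpha>\<in>monomials k. c \<alpha> * (t^k * monomial \<alpha> x))"
    using c by (auto simp: monomial_scale monomials_def intro!: sum.cong)
  also have "\<dots> = t^k * f x" using c by (simp add: sum_distrib_left algebra_simps)
  finally show ?thesis .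
qed

definition LP :: "nat \<Rightarrow> ('a::real_vector \<Rightarrow> real) \<Rightarrow> bool" where
  "LP d f \<longleftrightarrow> (\<forall>x v. \<exists>P. degree P \<le> d \<and> (\<forall>t. f (x + t *\<^sub>R v) = poly P t))"

lemma LP_mono: "LP d f \<Longrightarrow> d \<le> e \<Longrightarrow> LP e f"
  unfolding LP_def by (meson order_trans)

lemma LP_add: "LP d f \<Longrightarrow> LP d g \<Longrightarrow> LP d (\<lambda>x. f x + g x)"
  unfolding LP_def
proof (intro allI)
  fix x v assume "\<forall>x v. \<exists>P. degree P \<le> d \<and> (\<forall>t. f (x + t *\<^sub>R v) = poly P t)"
    "\<forall>x v. \<exists>P. degree P \<le> d \<and> (\<forall>t. g (x + t *\<^sub>R v) = poly P t)"
  then obtain P Q where "degree P \<le> d" "\<forall>t. f (x + t *\<^sub>R v) = poly P t" "degree Q \<le> d" "\<forall>t. g (x + t *\<^sub>R v) = poly Q t"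
    by blast
  then show "\<exists>P. degree P \<le> d \<and> (\<forall>t. f (x + t *\<^sub>R v) + g (x + t *\<^sub>R v) = poly P t)"
    by (intro exI[of _ "P + Q"]) (simp add: degree_add_le)
qed

lemma LP_mult: "LP d f \<Longrightarrow> LP e g \<Longrightarrow> LP (d + e) (\<lambda>x. f x * g x)"
  unfolding LP_def
proof (intro allI)
  fix x v assume "\<forall>x v. \<exists>P. degree P \<le> d \<and> (\<forall>t. f (x + t *\<^sub>R v) = poly P t)"
    "\<forall>x v. \<exists>P. degree P \<le> e \<and> (\<forall>t. g (x + t *\<^sub>R v) = poly P t)"
  then obtain P Q where "degree P \<le> d" "\<forall>t. f (x + t *\<^sub>R v) = poly P t" "degree Q \<le> e" "\<forall>t. g (x + t *\<^sub>R v) = poly Q t"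
    by blast
  then show "\<exists>P. degree P \<le> d + e \<and> (\<forall>t. f (x + t *\<^sub>R v) * g (x + t *\<^sub>R v) = poly P t)"
    by (intro exI[of _ "P * Q"]) (simp add: order_trans[OF degree_mult_le add_mono])
qed

lemma LP_sum: "finite I \<Longrightarrow> (\<And>i. i \<in> I \<Longrightarrow> LP d (f i)) \<Longrightarrow> LP d (\<lambda>x. \<Sum>i\<in>I. f i x)"
proof (induction I rule: finite_induct)
  case empty then show ?case unfolding LP_def by (intro allI exI[of _ 0]) simp
next
  case (insert i I) then show ?case by (simp add: LP_add)
qed

lemma LP_const: "LP d (\<lambda>x. c)"
  unfolding LP_def by (intro allI exI[of _ "[:c:]"]) simp

lemma LP_mon: "\<alpha> \<in> monomials k \<Longrightarrow> LP k (monomial \<alpha>)"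
  unfolding LP_def
proof (intro allI)
  fix x v :: 'a assume a: "\<alpha> \<in> monomials k"
  define P where "P = (\<Prod>b\<in>Basis. [:x \<bullet> b, v \<bullet> b:] ^ \<alpha> b)"
  have "degree P \<le> sum (degree \<circ> (\<lambda>b. [:x \<bullet> b, v \<bullet> b:] ^ \<alpha> b)) Basis"
    unfolding P_def by (rule degree_prod_sum_le) simp
  also have "\<dots> \<le> (\<Sum>b\<in>Basis. \<alpha> b)"
  proof (rule sum_mono)
    fix b :: 'a
    have "degree ([:x \<bullet> b, v \<bullet> b:] ^ \<alpha> b) \<le> degree [:x \<bullet> b, v \<bullet> b:] * \<alpha> b" by (rule degree_power_le)
    also have "\<dots> \<le> 1 * \<alpha> b" by (intro mult_right_mono) auto
    finally show "(degree \<circ> (\<lambda>b. [:x \<bullet> b, v \<bullet> b:] ^ \<alpha> b)) b \<le> \<alpha> b" by simp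
  qed
  also have "\<dots> = k" using a by (simp add: monomials_def)
  finally have "degree P \<le> k" .
  moreover have "\<forall>t. monomial \<alpha> (x + t *\<^sub>R v) = poly P t"
    unfolding P_def monomial_def by (simp add: poly_prod inner_add_left algebra_simps)
  ultimately show "\<exists>P. degree P \<le> k \<and> (\<forall>t. monomial \<alpha> (x + t *\<^sub>R v) = poly P t)" by blast
qed

lemma LP_cong: "LP d f \<Longrightarrow> (\<And>x. g x = f x) \<Longrightarrow> LP d g"
  unfolding LP_def by simp

lemma hp_LP:
  fixes f :: "'a::euclidean_space \<Rightarrow> real"
  assumes "homogeneous_poly k f" shows "LP k f"
proof -
  obtain c where c: "\<And>x. f x = (\<Sum>\<alpha>\<in>monomials k. c \<alpha> * monomial \<alpha> x)"
    using assms unfolding homogeneous_poly_def by blast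
  have "LP k (\<lambda>x. \<Sum>\<alpha>\<in>monomials k. c \<alpha> * monomial \<alpha> x)"
  proof (rule LP_sum[OF finite_monomials])
    fix \<alpha> :: "'a \<Rightarrow> nat" assume a: "\<alpha> \<in> monomials k"
    have "LP (0 + k) (\<lambda>x. c \<alpha> * monomial \<alpha> x)" by (rule LP_mult[OF LP_const LP_mon[OF a]])
    then show "LP k (\<lambda>x. c \<alpha> * monomial \<alpha> x)" by simp
  qed
  moreover have "f = (\<lambda>x. \<Sum>\<alpha>\<in>monomials k. c \<alpha> * monomial \<alpha> x)" using c by (rule ext)
  ultimately show ?thesis by simp
qed

lemma LP_zero_open:
  fixes f :: "'a::real_normed_vector \<Rightarrow> real"
  assumes "LP d f" "open W" "w \<in> W" "\<forall>x\<in>W. f x = 0"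
  shows "f z = 0"
proof -
  obtain e where e: "e > 0" "ball w e \<subseteq> W" using assms(2,3) openE by blast
  obtain P where P: "\<forall>t. f (w + t *\<^sub>R (z - w)) = poly P t" using assms(1) unfolding LP_def by blast
  define \<delta> where "\<delta> = e / (norm (z - w) + 1)"
  have np: "norm (z - w) + 1 > 0" by (simp add: add_nonneg_pos)
  have dpos: "\<delta> > 0" unfolding \<delta>_def by (rule divide_pos_pos[OF e(1) np])
  have de: "\<delta> * (norm (z - w) + 1) = e" unfolding \<delta>_def using np by (smt (verit) nonzero_eq_divide_eq)
  have "poly P t = 0" if t: "0 < t" "t < \<delta>" for t
  proof -
    have "norm (t *\<^sub>R (z - w)) = t * norm (z - w)" using t(1) by simp
    also have "\<dots> \<le> t * (norm (z - w) + 1)" using t(1) by (intro mult_left_mono) auto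
    also have "\<dots> < \<delta> * (norm (z - w) + 1)" using t np by (intro mult_strict_right_mono) auto
    finally have "norm (t *\<^sub>R (z - w)) < e" using de by linarith
    then have "w + t *\<^sub>R (z - w) \<in> ball w e" by (simp add: dist_norm)
    then have "w + t *\<^sub>R (z - w) \<in> W" using e(2) by blast
    then have "f (w + t *\<^sub>R (z - w)) = 0" using assms(4) by blast
    then show ?thesis using P by simp
  qed
  then have "{0<..<\<delta>} \<subseteq> {t. poly P t = 0}" by auto
  moreover have "infinite {0<..<\<delta>}" using dpos by simp
  ultimately have "infinite {t. poly P t = 0}" using finite_subset by blast
  then have "P = 0" using poly_roots_finite by blast
  then show ?thesis using P[rule_format, of 1] by simp
qed

definition curve2 :: "(real \<Rightarrow> 'b::real_normed_vector) \<Rightarrow> (real \<Rightarrow> 'b) \<Rightarrow> 'b \<Rightarrow> bool" where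
  "curve2 c d v \<longleftrightarrow> (\<forall>t. (c has_vector_derivative d t) (at t)) \<and> (d has_vector_derivative v) (at 0)"

lemma curve2_vd: "curve2 c d v \<Longrightarrow> vector_derivative (\<lambda>s. vector_derivative c (at s)) (at 0) = v"
proof -
  assume a: "curve2 c d v"
  then have "(\<lambda>s. vector_derivative c (at s)) = d"
    unfolding curve2_def by (auto intro!: ext vector_derivative_at)
  then show ?thesis using a unfolding curve2_def by (simp add: vector_derivative_at)
qed

lemma curve2_sum: "finite I \<Longrightarrow> (\<And>i. i \<in> I \<Longrightarrow> curve2 (c i) (d i) (v i)) \<Longrightarrow>
   curve2 (\<lambda>t. \<Sum>i\<in>I. c i t) (\<lambda>t. \<Sum>i\<in>I. d i t) (\<Sum>i\<in>I. v i)"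
  unfolding curve2_def by (auto intro!: has_vector_derivative_sum)

lemma curve2_scale: "curve2 c d v \<Longrightarrow> curve2 (\<lambda>t. c t *\<^sub>R a) (\<lambda>t. d t *\<^sub>R a) (v *\<^sub>R a)"
  unfolding curve2_def
  using bounded_linear.has_vector_derivative[OF bounded_linear_scaleR_left] by blast

lemma curve2_Pair: "curve2 c d v \<Longrightarrow> curve2 c' d' v' \<Longrightarrow> curve2 (\<lambda>t. (c t, c' t)) (\<lambda>t. (d t, d' t)) (v, v')"
  unfolding curve2_def by (auto intro!: has_vector_derivative_Pair)

lemma curve2_cong: "curve2 c d v \<Longrightarrow> (\<And>t. c' t = c t) \<Longrightarrow> curve2 c' d v"
proof -
  assume "curve2 c d v" "\<And>t. c' t = c t"
  moreover then have "c' = c" by auto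
  ultimately show ?thesis by simp
qed

lemma curve2_geo:
  fixes f :: "'a::real_normed_vector \<Rightarrow> real"
  assumes D1: "\<And>y. (f has_derivative Df y) (at y)"
    and D2: "\<And>y u. ((\<lambda>y. Df y u) has_derivative D2 y u) (at y)"
  shows "curve2 (\<lambda>t. f (cos t *\<^sub>R x + sin t *\<^sub>R e))
     (\<lambda>s. Df (cos s *\<^sub>R x + sin s *\<^sub>R e) (- sin s *\<^sub>R x + cos s *\<^sub>R e)) (D2 x e e - Df x x)"
proof -
  define \<gamma> where "\<gamma> = (\<lambda>t::real. cos t *\<^sub>R x + sin t *\<^sub>R e)"
  define \<gamma>' where "\<gamma>' = (\<lambda>t::real. - sin t *\<^sub>R x + cos t *\<^sub>R e)"
  have g: "(\<gamma> has_vector_derivative \<gamma>' t) (at t)" for t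
  proof -
    have cv: "(cos has_vector_derivative - sin t) (at t)" "(sin has_vector_derivative cos t) (at t)"
      using DERIV_cos[of t] DERIV_sin[of t] has_real_derivative_iff_has_vector_derivative by blast+
    have "((\<lambda>t. cos t *\<^sub>R x) has_vector_derivative (- sin t) *\<^sub>R x) (at t)"
      by (rule bounded_linear.has_vector_derivative[OF bounded_linear_scaleR_left cv(1)])
    moreover have "((\<lambda>t. sin t *\<^sub>R e) has_vector_derivative cos t *\<^sub>R e) (at t)"
      by (rule bounded_linear.has_vector_derivative[OF bounded_linear_scaleR_left cv(2)])
    ultimately show ?thesis unfolding \<gamma>_def \<gamma>'_def by (rule has_vector_derivative_add)
  qed
  have c1: "((\<lambda>t. f (\<gamma> t)) has_vector_derivative Df (\<gamma> t) (\<gamma>' t)) (at t)" for t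
    using vector_derivative_diff_chain_within[OF g[of t] has_derivative_at_withinI[OF D1]]
    by (simp add: o_def)
  have lin: "linear (Df y)" for y using has_derivative_linear[OF D1] .
  have dform: "Df (\<gamma> s) (\<gamma>' s) = - sin s * Df (\<gamma> s) x + cos s * Df (\<gamma> s) e" for s
    unfolding \<gamma>'_def linear_add[OF lin] linear_scale[OF lin] by simp
  have h: "((\<lambda>s. Df (\<gamma> s) u) has_vector_derivative D2 x u e) (at 0)" for u
  proof -
    have "((\<lambda>s. Df (\<gamma> s) u) has_vector_derivative D2 (\<gamma> 0) u (\<gamma>' 0)) (at 0)"
      using vector_derivative_diff_chain_within[OF g[of 0] has_derivative_at_withinI[OF D2]]
      by (simp add: o_def)
    then show ?thesis by (simp add: \<gamma>_def \<gamma>'_def)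
  qed
  have "((\<lambda>s. - sin s * Df (\<gamma> s) x + cos s * Df (\<gamma> s) e) has_real_derivative
        (- sin 0 * D2 x x e + - cos 0 * Df (\<gamma> 0) x) + (cos 0 * D2 x e e + - sin 0 * Df (\<gamma> 0) e)) (at 0)"
    using h[of x, folded has_real_derivative_iff_has_vector_derivative]
      h[of e, folded has_real_derivative_iff_has_vector_derivative]
    by (auto intro!: derivative_eq_intros)
  then have "((\<lambda>s. Df (\<gamma> s) (\<gamma>' s)) has_vector_derivative (D2 x e e - Df x x)) (at 0)"
    unfolding dform has_real_derivative_iff_has_vector_derivative by (simp add: \<gamma>_def)
  then show ?thesis using c1 unfolding curve2_def \<gamma>_def \<gamma>'_def by simp
qed

definition dmon :: "('a::euclidean_space \<Rightarrow> nat) \<Rightarrow> 'a \<Rightarrow> 'a \<Rightarrow> real" where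
  "dmon \<alpha> x v = (\<Sum>b\<in>Basis. (v \<bullet> b) * (of_nat (\<alpha> b) * monomial (\<alpha>(b := \<alpha> b - 1)) x))"

definition d2mon :: "('a::euclidean_space \<Rightarrow> nat) \<Rightarrow> 'a \<Rightarrow> 'a \<Rightarrow> 'a \<Rightarrow> real" where
  "d2mon \<alpha> x u w = (\<Sum>b\<in>Basis. (u \<bullet> b) * (of_nat (\<alpha> b) * dmon (\<alpha>(b := \<alpha> b - 1)) x w))"

lemma mon_upd_remove:
  assumes "b \<in> (Basis :: 'a::euclidean_space set)"
  shows "monomial (\<alpha>(b := n)) x = (x \<bullet> b) ^ n * (\<Prod>j\<in>Basis - {b}. (x \<bullet> j) ^ \<alpha> j)"
proof -
  have "monomial (\<alpha>(b := n)) x = (x \<bullet> b) ^ n * (\<Prod>j\<in>Basis - {b}. (x \<bullet> j) ^ (\<alpha>(b := n)) j)"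
    unfolding monomial_def using assms by (simp add: prod.remove)
  also have "(\<Prod>j\<in>Basis - {b}. (x \<bullet> j) ^ (\<alpha>(b := n)) j) = (\<Prod>j\<in>Basis - {b}. (x \<bullet> j) ^ \<alpha> j)"
    by (rule prod.cong) auto
  finally show ?thesis .
qed

lemma mon_remove:
  assumes "b \<in> (Basis :: 'a::euclidean_space set)"
  shows "monomial \<alpha> x = (x \<bullet> b) ^ \<alpha> b * (\<Prod>j\<in>Basis - {b}. (x \<bullet> j) ^ \<alpha> j)"
  using mon_upd_remove[OF assms, of \<alpha> "\<alpha> b"] by simp

lemma mon_deriv: "(monomial \<alpha> has_derivative dmon \<alpha> x) (at x)"
proof -
  have i: "((\<lambda>x. x \<bullet> j) has_derivative (\<lambda>y. y \<bullet> j)) (at x)" for j :: 'a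
    by (rule bounded_linear.has_derivative[OF bounded_linear_inner_left has_derivative_ident])
  have "((\<lambda>x. \<Prod>j\<in>Basis. (x \<bullet> j) ^ \<alpha> j) has_derivative
      (\<lambda>y. \<Sum>i\<in>Basis. (of_nat (\<alpha> i) * (y \<bullet> i) * (x \<bullet> i) ^ (\<alpha> i - 1)) * (\<Prod>j\<in>Basis - {i}. (x \<bullet> j) ^ \<alpha> j))) (at x)"
    by (rule has_derivative_prod, rule has_derivative_power, rule i)
  moreover have "(\<lambda>y. \<Sum>i\<in>Basis. (of_nat (\<alpha> i) * (y \<bullet> i) * (x \<bullet> i) ^ (\<alpha> i - 1)) * (\<Prod>j\<in>Basis - {i}. (x \<bullet> j) ^ \<alpha> j)) = dmon \<alpha> x"
    unfolding dmon_def
  proof (intro ext sum.cong refl)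
    fix y and i :: 'a assume "i \<in> Basis"
    then show "(of_nat (\<alpha> i) * (y \<bullet> i) * (x \<bullet> i) ^ (\<alpha> i - 1)) * (\<Prod>j\<in>Basis - {i}. (x \<bullet> j) ^ \<alpha> j) =
        (y \<bullet> i) * (of_nat (\<alpha> i) * monomial (\<alpha>(i := \<alpha> i - 1)) x)"
      by (simp add: mon_upd_remove)
  qed
  ultimately show ?thesis unfolding monomial_def[abs_def] by simp
qed

lemma sum_has_derivative_const_mult:
  fixes f :: "'i \<Rightarrow> 'a::real_normed_vector \<Rightarrow> real"
  assumes "finite I" "\<And>i. i \<in> I \<Longrightarrow> (f i has_derivative f' i) (at x)"
  shows "((\<lambda>y. \<Sum>i\<in>I. c i * f i y) has_derivative (\<lambda>w. \<Sum>i\<in>I. c i * f' i w)) (at x)"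
  using assms by (intro has_derivative_sum has_derivative_mult_right) auto

lemma dmon_deriv: "((\<lambda>y. dmon \<alpha> y u) has_derivative d2mon \<alpha> x u) (at x)"
proof -
  have "((\<lambda>y. \<Sum>b\<in>Basis. ((u \<bullet> b) * of_nat (\<alpha> b)) * monomial (\<alpha>(b := \<alpha> b - 1)) y) has_derivative
       (\<lambda>w. \<Sum>b\<in>Basis. ((u \<bullet> b) * of_nat (\<alpha> b)) * dmon (\<alpha>(b := \<alpha> b - 1)) x w)) (at x)"
    by (rule sum_has_derivative_const_mult) (auto intro: mon_deriv)
  then show ?thesis unfolding dmon_def[abs_def] d2mon_def[abs_def] by (simp add: mult.assoc)
qed

lemma sum_fun_upd_Basis:
  assumes "b \<in> (Basis :: 'a::euclidean_space set)"
  shows "(\<Sum>j\<in>Basis. (\<alpha>(b := n)) j) + \<alpha> b = (\<Sum>j\<in>Basis. \<alpha> j) + n"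
proof -
  have "(\<Sum>j\<in>Basis. (\<alpha>(b := n)) j) = n + (\<Sum>j\<in>Basis - {b}. (\<alpha>(b := n)) j)"
    using assms by (simp add: sum.remove)
  also have "(\<Sum>j\<in>Basis - {b}. (\<alpha>(b := n)) j) = (\<Sum>j\<in>Basis - {b}. \<alpha> j)" by (rule sum.cong) auto
  finally have 1: "(\<Sum>j\<in>Basis. (\<alpha>(b := n)) j) = n + (\<Sum>j\<in>Basis - {b}. \<alpha> j)" .
  have 2: "(\<Sum>j\<in>Basis. \<alpha> j) = \<alpha> b + (\<Sum>j\<in>Basis - {b}. \<alpha> j)" using assms by (simp add: sum.remove)
  show ?thesis unfolding 1 2 by (simp add: algebra_simps)
qed

lemma dmon_euler: "dmon \<alpha> x x = of_nat (\<Sum>b\<in>Basis. \<alpha> b) * monomial \<alpha> x"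
proof -
  have "dmon \<alpha> x x = (\<Sum>b\<in>Basis. of_nat (\<alpha> b) * monomial \<alpha> x)"
    unfolding dmon_def
  proof (rule sum.cong[OF refl])
    fix b :: 'a assume b: "b \<in> Basis"
    show "(x \<bullet> b) * (of_nat (\<alpha> b) * monomial (\<alpha>(b := \<alpha> b - 1)) x) = of_nat (\<alpha> b) * monomial \<alpha> x"
    proof (cases "\<alpha> b")
      case 0 then show ?thesis by simp
    next
      case (Suc n)
      then show ?thesis using b by (simp add: mon_upd_remove mon_remove[of b])
    qed
  qed
  also have "\<dots> = of_nat (\<Sum>b\<in>Basis. \<alpha> b) * monomial \<alpha> x" by (simp add: sum_distrib_right)
  finally show ?thesis .
qed

lemma d2mon_euler: "d2mon \<alpha> x x x = of_nat (\<Sum>b\<in>Basis. \<alpha> b) * (of_nat (\<Sum>b\<in>Basis. \<alpha> b) - 1) * monomial \<alpha> x"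
proof -
  have "d2mon \<alpha> x x x = (\<Sum>b\<in>Basis. (of_nat (\<Sum>b\<in>Basis. \<alpha> b) - 1) * ((x \<bullet> b) * (of_nat (\<alpha> b) * monomial (\<alpha>(b := \<alpha> b - 1)) x)))"
    unfolding d2mon_def
  proof (rule sum.cong[OF refl])
    fix b :: 'a assume b: "b \<in> Basis"
    show "(x \<bullet> b) * (of_nat (\<alpha> b) * dmon (\<alpha>(b := \<alpha> b - 1)) x x) = (of_nat (\<Sum>b\<in>Basis. \<alpha> b) - 1) * ((x \<bullet> b) * (of_nat (\<alpha> b) * monomial (\<alpha>(b := \<alpha> b - 1)) x))"
    proof (cases "\<alpha> b")
      case 0 then show ?thesis by simp
    next
      case (Suc n)
      obtain S1 where S1: "S1 = (\<Sum>j\<in>Basis. (\<alpha>(b := \<alpha> b - 1)) j)" by blast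
      have "S1 + \<alpha> b = (\<Sum>j\<in>Basis. \<alpha> j) + (\<alpha> b - 1)"
        unfolding S1 by (rule sum_fun_upd_Basis[OF b])
      then have S: "(\<Sum>j\<in>Basis. \<alpha> j) = Suc S1" using Suc by arith
      have "dmon (\<alpha>(b := \<alpha> b - 1)) x x = real S1 * monomial (\<alpha>(b := \<alpha> b - 1)) x"
        unfolding S1 by (rule dmon_euler)
      then show ?thesis unfolding S by simp
    qed
  qed
  also have "\<dots> = (of_nat (\<Sum>b\<in>Basis. \<alpha> b) - 1) * dmon \<alpha> x x"
    unfolding dmon_def by (simp add: sum_distrib_left)
  also have "\<dots> = of_nat (\<Sum>b\<in>Basis. \<alpha> b) * (of_nat (\<Sum>b\<in>Basis. \<alpha> b) - 1) * monomial \<alpha> x"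
    by (simp add: dmon_euler)
  finally show ?thesis .
qed

lemma d2mon_diag:
  assumes "b \<in> (Basis :: 'a::euclidean_space set)"
  shows "d2mon \<alpha> x b b = of_nat (\<alpha> b) * (of_nat (\<alpha> b) - 1) * monomial (\<alpha>(b := \<alpha> b - Suc (Suc 0))) x"
proof -
  have "d2mon \<alpha> x b b = (\<Sum>c\<in>Basis. if c = b then of_nat (\<alpha> c) * dmon (\<alpha>(c := \<alpha> c - 1)) x b else 0)"
    unfolding d2mon_def using assms by (intro sum.cong) (auto simp: inner_Basis)
  also have "\<dots> = of_nat (\<alpha> b) * dmon (\<alpha>(b := \<alpha> b - 1)) x b" using assms by simp
  also have "dmon (\<alpha>(b := \<alpha> b - 1)) x b = (\<Sum>c\<in>Basis. if c = b then of_nat ((\<alpha>(b := \<alpha> b - 1)) c) * monomial ((\<alpha>(b := \<alpha> b - 1))(c := (\<alpha>(b := \<alpha> b - 1)) c - 1)) x else 0)"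
    unfolding dmon_def using assms by (intro sum.cong) (auto simp: inner_Basis)
  also have "\<dots> = of_nat (\<alpha> b - 1) * monomial (\<alpha>(b := \<alpha> b - Suc (Suc 0))) x" using assms by simp
  finally show ?thesis by (cases "\<alpha> b") auto
qed

lemma d2mon_shape:
  "d2mon \<alpha> x u w = (\<Sum>b\<in>Basis. \<Sum>b'\<in>Basis. (u \<bullet> b) * (w \<bullet> b') *
      (of_nat (\<alpha> b) * (of_nat ((\<alpha>(b := \<alpha> b - 1)) b') * monomial ((\<alpha>(b := \<alpha> b - 1))(b' := (\<alpha>(b := \<alpha> b - 1)) b' - 1)) x)))"
  unfolding d2mon_def dmon_def by (simp add: sum_distrib_left mult_ac)

lemma tangent_facts:
  assumes "tangent_onb x B"
  shows "finite B" "\<And>e. e \<in> B \<Longrightarrow> e \<bullet> x = 0"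
    "\<And>e e'. e \<in> B \<Longrightarrow> e' \<in> B \<Longrightarrow> e \<bullet> e' = (if e = e' then 1 else 0)"
    "span B = {v. v \<bullet> x = 0}"
proof -
  show "finite B" "span B = {v. v \<bullet> x = 0}" using assms unfolding tangent_onb_def by auto
  show "e \<bullet> x = 0" if "e \<in> B" for e
    using assms that span_base[of e B] unfolding tangent_onb_def by auto
  show "e \<bullet> e' = (if e = e' then 1 else 0)" if "e \<in> B" "e' \<in> B" for e e'
  proof (cases "e = e'")
    case True
    then have "e \<bullet> e' = (norm e)^2" by (simp add: power2_norm_eq_inner)
    then show ?thesis using assms that True unfolding tangent_onb_def by simp
  next
    case False
    then show ?thesis using assms that unfolding tangent_onb_def pairwise_def orthogonal_def by auto
  qed
qed

lemma tangent_expand: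
  assumes T: "tangent_onb x B" and x: "norm x = 1"
  shows "u = (\<Sum>e\<in>B. (u \<bullet> e) *\<^sub>R e) + (u \<bullet> x) *\<^sub>R x"
proof -
  note tf = tangent_facts[OF T]
  have xx: "x \<bullet> x = 1" using x by (simp add: power2_norm_eq_inner[symmetric])
  define w where "w = u - (\<Sum>e\<in>B. (u \<bullet> e) *\<^sub>R e) - (u \<bullet> x) *\<^sub>R x"
  have we: "w \<bullet> e0 = 0" if e0: "e0 \<in> B" for e0
  proof -
    have "(\<Sum>e\<in>B. (u \<bullet> e) * (e \<bullet> e0)) = (\<Sum>e\<in>B. if e = e0 then u \<bullet> e else 0)"
      by (rule sum.cong) (auto simp: tf(3)[OF _ e0])
    also have "\<dots> = u \<bullet> e0" using e0 tf(1) by simp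
    finally have S: "(\<Sum>e\<in>B. (u \<bullet> e) * (e \<bullet> e0)) = u \<bullet> e0" .
    have x0: "x \<bullet> e0 = 0" using tf(2)[OF e0] by (simp add: inner_commute)
    show ?thesis by (simp only: w_def inner_diff_left inner_sum_left inner_scaleR_left S x0)
  qed
  have "w \<bullet> x = 0"
    unfolding w_def using tf(2) xx by (simp add: inner_diff_left inner_sum_left)
  then have "w \<in> span B" using tf(4) by simp
  then have "orthogonal w w"
    by (rule orthogonal_to_span) (use we in \<open>auto simp: orthogonal_def\<close>)
  then have "w = 0" by (simp add: orthogonal_self)
  then show ?thesis unfolding w_def by (simp add: algebra_simps)
qed

lemma tangent_parseval:
  assumes T: "tangent_onb x B" and x: "norm x = 1"
  shows "(\<Sum>e\<in>B. (e \<bullet> p) * (e \<bullet> q)) = p \<bullet> q - (x \<bullet> p) * (x \<bullet> q)"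
proof -
  have "p \<bullet> q = ((\<Sum>e\<in>B. (p \<bullet> e) *\<^sub>R e) + (p \<bullet> x) *\<^sub>R x) \<bullet> q"
    using tangent_expand[OF T x, of p] by simp
  also have "\<dots> = (\<Sum>e\<in>B. (p \<bullet> e) * (e \<bullet> q)) + (p \<bullet> x) * (x \<bullet> q)"
    by (simp only: inner_add_left inner_sum_left inner_scaleR_left)
  also have "\<dots> = (\<Sum>e\<in>B. (e \<bullet> p) * (e \<bullet> q)) + (x \<bullet> p) * (x \<bullet> q)"
    by (simp add: inner_commute[of p])
  finally show ?thesis by simp
qed

lemma trace_aux:
  fixes D :: "'a::euclidean_space \<Rightarrow> 'a \<Rightarrow> real"
  assumes D: "\<And>u w. D u w = (\<Sum>i\<in>I. \<Sum>b\<in>Basis. \<Sum>b'\<in>Basis. (u \<bullet> b) * (w \<bullet> b') * T i b b')"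
  shows "(\<Sum>e\<in>E. D e e) = (\<Sum>i\<in>I. \<Sum>b\<in>Basis. \<Sum>b'\<in>Basis. (\<Sum>e\<in>E. (e \<bullet> b) * (e \<bullet> b')) * T i b b')"
proof -
  have "(\<Sum>e\<in>E. D e e) = (\<Sum>e\<in>E. \<Sum>i\<in>I. \<Sum>b\<in>Basis. \<Sum>b'\<in>Basis. (e \<bullet> b) * (e \<bullet> b') * T i b b')"
    by (simp add: D)
  also have "\<dots> = (\<Sum>i\<in>I. \<Sum>e\<in>E. \<Sum>b\<in>Basis. \<Sum>b'\<in>Basis. (e \<bullet> b) * (e \<bullet> b') * T i b b')"
    by (rule sum.swap)
  also have "\<dots> = (\<Sum>i\<in>I. \<Sum>b\<in>Basis. \<Sum>e\<in>E. \<Sum>b'\<in>Basis. (e \<bullet> b) * (e \<bullet> b') * T i b b')"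
    by (rule sum.cong[OF refl], rule sum.swap)
  also have "\<dots> = (\<Sum>i\<in>I. \<Sum>b\<in>Basis. \<Sum>b'\<in>Basis. \<Sum>e\<in>E. (e \<bullet> b) * (e \<bullet> b') * T i b b')"
    by (rule sum.cong[OF refl], rule sum.cong[OF refl], rule sum.swap)
  also have "\<dots> = (\<Sum>i\<in>I. \<Sum>b\<in>Basis. \<Sum>b'\<in>Basis. (\<Sum>e\<in>E. (e \<bullet> b) * (e \<bullet> b')) * T i b b')"
    by (simp add: sum_distrib_right)
  finally show ?thesis .
qed

lemma trace_shape:
  fixes D :: "'a::euclidean_space \<Rightarrow> 'a \<Rightarrow> real"
  assumes D: "\<And>u w. D u w = (\<Sum>i\<in>I. \<Sum>b\<in>Basis. \<Sum>b'\<in>Basis. (u \<bullet> b) * (w \<bullet> b') * T i b b')"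
    and T: "tangent_onb x B" and x: "norm x = 1"
  shows "(\<Sum>e\<in>B. D e e) = (\<Sum>b\<in>Basis. D b b) - D x x"
proof -
  have 1: "(\<Sum>e\<in>B. D e e) = (\<Sum>i\<in>I. \<Sum>b\<in>Basis. \<Sum>b'\<in>Basis. (b \<bullet> b' - (x \<bullet> b) * (x \<bullet> b')) * T i b b')"
    unfolding trace_aux[OF D] tangent_parseval[OF T x] ..
  have 2: "(\<Sum>c\<in>Basis. D c c) = (\<Sum>i\<in>I. \<Sum>b\<in>Basis. \<Sum>b'\<in>Basis. (b \<bullet> b') * T i b b')"
  proof -
    have e: "(\<Sum>c\<in>Basis. (c \<bullet> b) * (c \<bullet> b')) = b \<bullet> b'" for b b' :: 'a
      by (subst euclidean_inner[of b b']) (simp add: inner_commute)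
    show ?thesis unfolding trace_aux[OF D] e ..
  qed
  have 3: "D x x = (\<Sum>i\<in>I. \<Sum>b\<in>Basis. \<Sum>b'\<in>Basis. ((x \<bullet> b) * (x \<bullet> b')) * T i b b')"
    by (simp add: D)
  show ?thesis unfolding 1 2 3 by (simp add: left_diff_distrib sum_subtractf)
qed

lemma tangent_onb_exists: "\<exists>B. tangent_onb (x::'a::euclidean_space) B"
proof -
  have "subspace {v::'a. v \<bullet> x = 0}"
    using subspace_hyperplane[of x] by (simp add: inner_commute)
  then obtain B where "B \<subseteq> {v. v \<bullet> x = 0}" "pairwise orthogonal B" "\<And>v. v \<in> B \<Longrightarrow> norm v = 1"
    "independent B" "span B = {v. v \<bullet> x = 0}"
    by (rule orthonormal_basis_subspace) blast
  then show ?thesis unfolding tangent_onb_def using independent_imp_finite by blast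
qed

definition DPc :: "(('a::euclidean_space \<Rightarrow> nat) \<Rightarrow> real) \<Rightarrow> nat \<Rightarrow> 'a \<Rightarrow> 'a \<Rightarrow> real" where
  "DPc c k y u = (\<Sum>\<alpha>\<in>monomials k. c \<alpha> * dmon \<alpha> y u)"

definition D2Pc :: "(('a::euclidean_space \<Rightarrow> nat) \<Rightarrow> real) \<Rightarrow> nat \<Rightarrow> 'a \<Rightarrow> 'a \<Rightarrow> 'a \<Rightarrow> real" where
  "D2Pc c k y u w = (\<Sum>\<alpha>\<in>monomials k. c \<alpha> * d2mon \<alpha> y u w)"

definition LapC :: "(('a::euclidean_space \<Rightarrow> nat) \<Rightarrow> real) \<Rightarrow> nat \<Rightarrow> 'a \<Rightarrow> real" where
  "LapC c k y = (\<Sum>b\<in>Basis. D2Pc c k y b b)"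

lemma Pc_deriv: "((\<lambda>y. \<Sum>\<alpha>\<in>monomials k. c \<alpha> * monomial \<alpha> y) has_derivative (\<lambda>u. DPc c k y u)) (at y)"
  unfolding DPc_def by (rule sum_has_derivative_const_mult[OF finite_monomials mon_deriv])

lemma DPc_deriv: "((\<lambda>y. DPc c k y u) has_derivative (\<lambda>w. D2Pc c k y u w)) (at y)"
  unfolding DPc_def D2Pc_def by (rule sum_has_derivative_const_mult[OF finite_monomials dmon_deriv])

lemma monomials_sum: "\<alpha> \<in> monomials k \<Longrightarrow> (\<Sum>b\<in>Basis. \<alpha> b) = k"
  unfolding monomials_def by simp

lemma DPc_euler: "DPc c k y y = real k * (\<Sum>\<alpha>\<in>monomials k. c \<alpha> * monomial \<alpha> y)"
  unfolding DPc_def sum_distrib_left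
  by (rule sum.cong[OF refl]) (simp add: dmon_euler monomials_sum)

lemma D2Pc_euler: "D2Pc c k y y y = real k * (real k - 1) * (\<Sum>\<alpha>\<in>monomials k. c \<alpha> * monomial \<alpha> y)"
  unfolding D2Pc_def sum_distrib_left
  by (rule sum.cong[OF refl]) (simp add: d2mon_euler monomials_sum)

lemma D2Pc_shape: "D2Pc c k y u w = (\<Sum>\<alpha>\<in>monomials k. \<Sum>b\<in>Basis. \<Sum>b'\<in>Basis. (u \<bullet> b) * (w \<bullet> b') *
      (c \<alpha> * (of_nat (\<alpha> b) * (of_nat ((\<alpha>(b := \<alpha> b - 1)) b') * monomial ((\<alpha>(b := \<alpha> b - 1))(b' := (\<alpha>(b := \<alpha> b - 1)) b' - 1)) y))))"
  unfolding D2Pc_def d2mon_shape by (simp add: sum_distrib_left mult_ac)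

lemma LapC_formula: "LapC c k y = (\<Sum>\<alpha>\<in>monomials k. \<Sum>b\<in>Basis. c \<alpha> * (of_nat (\<alpha> b) * (of_nat (\<alpha> b) - 1) * monomial (\<alpha>(b := \<alpha> b - Suc (Suc 0))) y))"
proof -
  have "LapC c k y = (\<Sum>b\<in>Basis. \<Sum>\<alpha>\<in>monomials k. c \<alpha> * d2mon \<alpha> y b b)"
    unfolding LapC_def D2Pc_def ..
  also have "\<dots> = (\<Sum>\<alpha>\<in>monomials k. \<Sum>b\<in>Basis. c \<alpha> * d2mon \<alpha> y b b)" by (rule sum.swap)
  also have "\<dots> = (\<Sum>\<alpha>\<in>monomials k. \<Sum>b\<in>Basis. c \<alpha> * (of_nat (\<alpha> b) * (of_nat (\<alpha> b) - 1) * monomial (\<alpha>(b := \<alpha> b - Suc (Suc 0))) y))"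
    by (intro sum.cong refl) (simp add: d2mon_diag)
  finally show ?thesis .
qed

lemma monomials_sub2:
  assumes "\<alpha> \<in> monomials k" "b \<in> Basis" "\<alpha> b \<ge> 2"
  shows "\<alpha>(b := \<alpha> b - Suc (Suc 0)) \<in> monomials (k - 2)"
proof -
  have "(\<Sum>j\<in>Basis. (\<alpha>(b := \<alpha> b - Suc (Suc 0))) j) + \<alpha> b = (\<Sum>j\<in>Basis. \<alpha> j) + (\<alpha> b - Suc (Suc 0))"
    by (rule sum_fun_upd_Basis[OF assms(2)])
  then have "(\<Sum>j\<in>Basis. (\<alpha>(b := \<alpha> b - Suc (Suc 0))) j) = k - 2"
    using assms(3) monomials_sum[OF assms(1)] by linarith
  then show ?thesis using assms(1,2) unfolding monomials_def by auto
qed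

lemma LapC_hp: "homogeneous_poly (k - 2) (LapC c k)"
proof -
  have "homogeneous_poly (k - 2) (\<lambda>y. \<Sum>\<alpha>\<in>monomials k. \<Sum>b\<in>Basis. c \<alpha> * (of_nat (\<alpha> b) * (of_nat (\<alpha> b) - 1) * monomial (\<alpha>(b := \<alpha> b - Suc (Suc 0))) y))"
  proof (intro hp_sum finite_monomials finite_Basis)
    fix \<alpha> :: "'a \<Rightarrow> nat" and b :: 'a assume a: "\<alpha> \<in> monomials k" and b: "b \<in> Basis"
    show "homogeneous_poly (k - 2) (\<lambda>y. c \<alpha> * (of_nat (\<alpha> b) * (of_nat (\<alpha> b) - 1) * monomial (\<alpha>(b := \<alpha> b - Suc (Suc 0))) y))"
    proof (cases "\<alpha> b \<ge> 2")
      case True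
      have "homogeneous_poly (k - 2) (\<lambda>y. (c \<alpha> * (of_nat (\<alpha> b) * (of_nat (\<alpha> b) - 1))) * monomial (\<alpha>(b := \<alpha> b - Suc (Suc 0))) y)"
        by (rule hp_scale, rule hp_mon, rule monomials_sub2[OF a b True])
      then show ?thesis by (simp add: mult_ac)
    next
      case False
      then have "\<alpha> b = 0 \<or> \<alpha> b = 1" by auto
      then show ?thesis by (rule disjE) (simp_all add: hp_zero)
    qed
  qed
  then show ?thesis unfolding LapC_formula[abs_def] .
qed

lemma LapC_zero: "k \<le> 1 \<Longrightarrow> LapC c k y = 0"
proof -
  assume k: "k \<le> 1"
  have "\<alpha> b = 0 \<or> \<alpha> b = 1" if "\<alpha> \<in> monomials k" "b \<in> Basis" for \<alpha> :: "'a \<Rightarrow> nat" and b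
    using member_le_sum[of b Basis \<alpha>] that k monomials_sum[OF that(1)] by auto
  then show ?thesis unfolding LapC_formula by (intro sum.neutral ballI) auto
qed

lemma form_coeffs:
  assumes "is_form k (F :: 'a::euclidean_space \<Rightarrow> 'b::euclidean_space)"
  obtains C where "\<And>a y. a \<in> Basis \<Longrightarrow> F y \<bullet> a = (\<Sum>\<alpha>\<in>monomials k. C a \<alpha> * monomial \<alpha> y)"
proof -
  have "\<forall>a\<in>Basis. \<exists>c. \<forall>y. F y \<bullet> a = (\<Sum>\<alpha>\<in>monomials k. c \<alpha> * monomial \<alpha> y)"
    using assms unfolding is_form_def homogeneous_poly_def by blast
  then obtain C where "\<forall>a\<in>Basis. \<forall>y. F y \<bullet> a = (\<Sum>\<alpha>\<in>monomials k. C a \<alpha> * monomial \<alpha> y)"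
    by (rule bchoice[elim_format]) blast
  then show ?thesis using that by blast
qed

lemma form_lap:
  fixes F :: "'a::euclidean_space \<Rightarrow> 'b::euclidean_space"
  assumes "is_form k F"
  obtains H where "is_form (k - 2) H" "k \<le> 1 \<Longrightarrow> \<forall>y. H y = 0"
    "\<And>x. norm x = 1 \<Longrightarrow> sphere_laplacian F x =
        H x - (real k * (real k - 1) + real (card (SOME B. tangent_onb x B)) * real k) *\<^sub>R F x"
    "\<And>x e. \<exists>d. curve2 (\<lambda>t. F (cos t *\<^sub>R x + sin t *\<^sub>R e)) d (geodesic_second_deriv F x e)"
proof -
  obtain C where C: "\<And>a y. a \<in> Basis \<Longrightarrow> F y \<bullet> a = (\<Sum>\<alpha>\<in>monomials k. C a \<alpha> * monomial \<alpha> y)"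
    using form_coeffs[OF assms] by blast
  define H where "H y = (\<Sum>a\<in>Basis. LapC (C a) k y *\<^sub>R a)" for y
  have Ha: "H y \<bullet> a = LapC (C a) k y" if "a \<in> Basis" for y a
  proof -
    have "H y \<bullet> a = (\<Sum>b\<in>Basis. if b = a then LapC (C b) k y else 0)"
      unfolding H_def inner_sum_left by (rule sum.cong) (auto simp: inner_Basis that)
    then show ?thesis using that by simp
  qed
  have H1: "is_form (k - 2) H"
    unfolding is_form_def
  proof (intro ballI)
    fix a :: 'b assume a: "a \<in> Basis"
    show "homogeneous_poly (k - 2) (\<lambda>y. H y \<bullet> a)" by (rule hp_cong[OF LapC_hp]) (simp add: Ha[OF a])
  qed
  have H2: "\<forall>y. H y = 0" if "k \<le> 1"
    unfolding H_def by (simp add: LapC_zero[OF that])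
  define \<gamma> where "\<gamma> x e t = cos t *\<^sub>R x + sin t *\<^sub>R e" for x e :: 'a and t :: real
  have cc: "curve2 (\<lambda>t. F (\<gamma> x e t) \<bullet> a) (\<lambda>s. DPc (C a) k (\<gamma> x e s) (- sin s *\<^sub>R x + cos s *\<^sub>R e))
      (D2Pc (C a) k x e e - DPc (C a) k x x)" if a: "a \<in> Basis" for x e a
    unfolding \<gamma>_def
    by (rule curve2_cong[OF curve2_geo[OF Pc_deriv DPc_deriv]]) (simp add: C[OF a])
  have cF: "curve2 (\<lambda>t. F (\<gamma> x e t)) (\<lambda>s. \<Sum>a\<in>Basis. DPc (C a) k (\<gamma> x e s) (- sin s *\<^sub>R x + cos s *\<^sub>R e) *\<^sub>R a)
      (\<Sum>a\<in>Basis. (D2Pc (C a) k x e e - DPc (C a) k x x) *\<^sub>R a)" for x e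
    by (rule curve2_cong[OF curve2_sum[OF finite_Basis curve2_scale[OF cc]]]) (simp_all add: euclidean_representation)
  have gsd: "geodesic_second_deriv F x e = (\<Sum>a\<in>Basis. (D2Pc (C a) k x e e - DPc (C a) k x x) *\<^sub>R a)" for x e
    unfolding geodesic_second_deriv_def using curve2_vd[OF cF[of x e]] unfolding \<gamma>_def .
  have H3: "sphere_laplacian F x =
        H x - (real k * (real k - 1) + real (card (SOME B. tangent_onb x B)) * real k) *\<^sub>R F x"
    if x: "norm x = 1" for x
  proof -
    define B where "B = (SOME B. tangent_onb x B)"
    have T: "tangent_onb x B" unfolding B_def by (rule someI_ex[OF tangent_onb_exists])
    have fB: "finite B" using tangent_facts(1)[OF T] .
    define N where "N = real (card B)"
    have comp: "(\<Sum>e\<in>B. D2Pc (C a) k x e e - DPc (C a) k x x) =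
        LapC (C a) k x - (real k * (real k - 1) + N * real k) * (F x \<bullet> a)" if a: "a \<in> Basis" for a
    proof -
      have "(\<Sum>e\<in>B. D2Pc (C a) k x e e) = (\<Sum>b\<in>Basis. D2Pc (C a) k x b b) - D2Pc (C a) k x x x"
        by (rule trace_shape[OF D2Pc_shape T x])
      then show ?thesis
        unfolding LapC_def N_def sum_subtractf using fB
        by (simp add: D2Pc_euler DPc_euler C[OF a] algebra_simps)
    qed
    have "sphere_laplacian F x = (\<Sum>e\<in>B. \<Sum>a\<in>Basis. (D2Pc (C a) k x e e - DPc (C a) k x x) *\<^sub>R a)"
      unfolding sphere_laplacian_def B_def[symmetric] gsd ..
    also have "\<dots> = (\<Sum>a\<in>Basis. (\<Sum>e\<in>B. D2Pc (C a) k x e e - DPc (C a) k x x) *\<^sub>R a)"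
      by (subst sum.swap) (simp add: scaleR_sum_left)
    also have "\<dots> = (\<Sum>a\<in>Basis. (LapC (C a) k x - (real k * (real k - 1) + N * real k) * (F x \<bullet> a)) *\<^sub>R a)"
      by (rule sum.cong[OF refl]) (simp add: comp)
    also have "\<dots> = H x - (real k * (real k - 1) + N * real k) *\<^sub>R F x"
    proof -
      have R: "(\<Sum>a\<in>Basis. (c * (F x \<bullet> a)) *\<^sub>R a) = c *\<^sub>R F x" for c
      proof -
        have "(\<Sum>a\<in>Basis. (c * (F x \<bullet> a)) *\<^sub>R a) = c *\<^sub>R (\<Sum>a\<in>Basis. (F x \<bullet> a) *\<^sub>R a)"
          by (simp add: scaleR_sum_right)
        then show ?thesis by (simp add: euclidean_representation)
      qed
      show ?thesis unfolding H_def by (simp add: scaleR_left_diff_distrib sum_subtractf R)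
    qed
    finally show ?thesis unfolding N_def B_def .
  qed
  have H4: "\<exists>d. curve2 (\<lambda>t. F (cos t *\<^sub>R x + sin t *\<^sub>R e)) d (geodesic_second_deriv F x e)" for x e
    using cF[of x e] unfolding gsd \<gamma>_def by blast
  show ?thesis using that H1 H2 H3 H4 by blast
qed

definition bfree :: "'a::euclidean_space \<Rightarrow> ('a \<Rightarrow> real) \<Rightarrow> bool" where
  "bfree b0 f \<longleftrightarrow> (\<forall>x t. f (x + t *\<^sub>R b0) = f x)"

definition DIV :: "'a::euclidean_space \<Rightarrow> nat \<Rightarrow> ('a \<Rightarrow> real) \<Rightarrow> bool" where
  "DIV b0 d f \<longleftrightarrow> (\<exists>Q A B. homogeneous_poly (d - 2) Q \<and> homogeneous_poly (d - 1) A \<and> homogeneous_poly d B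
      \<and> bfree b0 A \<and> bfree b0 B \<and> (\<forall>x. f x = (x \<bullet> x) * Q x + (x \<bullet> b0) * A x + B x))"

lemma bfree_add: "bfree b0 f \<Longrightarrow> bfree b0 g \<Longrightarrow> bfree b0 (\<lambda>x. f x + g x)"
  unfolding bfree_def by simp

lemma bfree_scale: "bfree b0 f \<Longrightarrow> bfree b0 (\<lambda>x. c * f x)"
  unfolding bfree_def by simp

lemma bfree_zero: "bfree b0 (\<lambda>x. 0)"
  unfolding bfree_def by simp

lemma bfree_mon:
  assumes "b0 \<in> Basis" "\<alpha> b0 = 0"
  shows "bfree b0 (monomial \<alpha>)"
  unfolding bfree_def monomial_def
proof (intro allI prod.cong refl)
  fix x t and b :: 'a assume b: "b \<in> Basis"
  show "((x + t *\<^sub>R b0) \<bullet> b) ^ \<alpha> b = (x \<bullet> b) ^ \<alpha> b"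
  proof (cases "b = b0")
    case True then show ?thesis using assms by simp
  next
    case False then show ?thesis using assms b by (simp add: inner_add_left inner_Basis)
  qed
qed

lemma DIV_add:
  assumes "DIV b0 d f" "DIV b0 d g" shows "DIV b0 d (\<lambda>x. f x + g x)"
proof -
  obtain Q A B where 1: "homogeneous_poly (d - 2) Q" "homogeneous_poly (d - 1) A" "homogeneous_poly d B" "bfree b0 A" "bfree b0 B"
    "\<forall>x. f x = x \<bullet> x * Q x + x \<bullet> b0 * A x + B x" using assms(1) unfolding DIV_def by blast
  obtain Q' A' B' where 2: "homogeneous_poly (d - 2) Q'" "homogeneous_poly (d - 1) A'" "homogeneous_poly d B'" "bfree b0 A'" "bfree b0 B'"
    "\<forall>x. g x = x \<bullet> x * Q' x + x \<bullet> b0 * A' x + B' x" using assms(2) unfolding DIV_def by blast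
  show ?thesis unfolding DIV_def
  proof (rule exI[of _ "\<lambda>x. Q x + Q' x"], rule exI[of _ "\<lambda>x. A x + A' x"], rule exI[of _ "\<lambda>x. B x + B' x"], intro conjI allI)
    show "homogeneous_poly (d - 2) (\<lambda>x. Q x + Q' x)" by (rule hp_add[OF 1(1) 2(1)])
    show "homogeneous_poly (d - 1) (\<lambda>x. A x + A' x)" by (rule hp_add[OF 1(2) 2(2)])
    show "homogeneous_poly d (\<lambda>x. B x + B' x)" by (rule hp_add[OF 1(3) 2(3)])
    show "bfree b0 (\<lambda>x. A x + A' x)" by (rule bfree_add[OF 1(4) 2(4)])
    show "bfree b0 (\<lambda>x. B x + B' x)" by (rule bfree_add[OF 1(5) 2(5)])
    fix x show "f x + g x = x \<bullet> x * (Q x + Q' x) + x \<bullet> b0 * (A x + A' x) + (B x + B' x)"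
      using 1(6) 2(6) by (simp add: algebra_simps)
  qed
qed

lemma DIV_scale:
  assumes "DIV b0 d f" shows "DIV b0 d (\<lambda>x. c * f x)"
proof -
  obtain Q A B where 1: "homogeneous_poly (d - 2) Q" "homogeneous_poly (d - 1) A" "homogeneous_poly d B" "bfree b0 A" "bfree b0 B"
    "\<forall>x. f x = x \<bullet> x * Q x + x \<bullet> b0 * A x + B x" using assms(1) unfolding DIV_def by blast
  show ?thesis unfolding DIV_def
  proof (rule exI[of _ "\<lambda>x. c * Q x"], rule exI[of _ "\<lambda>x. c * A x"], rule exI[of _ "\<lambda>x. c * B x"], intro conjI allI)
    show "homogeneous_poly (d - 2) (\<lambda>x. c * Q x)" by (rule hp_scale[OF 1(1)])
    show "homogeneous_poly (d - 1) (\<lambda>x. c * A x)" by (rule hp_scale[OF 1(2)])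
    show "homogeneous_poly d (\<lambda>x. c * B x)" by (rule hp_scale[OF 1(3)])
    show "bfree b0 (\<lambda>x. c * A x)" by (rule bfree_scale[OF 1(4)])
    show "bfree b0 (\<lambda>x. c * B x)" by (rule bfree_scale[OF 1(5)])
    fix x show "c * f x = x \<bullet> x * (c * Q x) + x \<bullet> b0 * (c * A x) + c * B x"
      using 1(6) by (simp add: algebra_simps)
  qed
qed

lemma DIV_zero: "DIV b0 d (\<lambda>x. 0)"
  unfolding DIV_def
  by (intro exI[of _ "\<lambda>x. 0"]) (simp add: hp_zero bfree_zero)

lemma DIV_sum: "finite I \<Longrightarrow> (\<And>i. i \<in> I \<Longrightarrow> DIV b0 d (f i)) \<Longrightarrow> DIV b0 d (\<lambda>x. \<Sum>i\<in>I. f i x)"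
proof (induction I rule: finite_induct)
  case empty then show ?case by (simp add: DIV_zero)
next
  case (insert i I) then show ?case by (simp add: DIV_add)
qed

lemma DIV_cong: "DIV b0 d f \<Longrightarrow> (\<And>x. g x = f x) \<Longrightarrow> DIV b0 d g"
proof -
  assume "DIV b0 d f" "\<And>x. g x = f x"
  moreover then have "g = f" by auto
  ultimately show ?thesis by simp
qed

lemma mon_add2:
  assumes "b \<in> (Basis :: 'a::euclidean_space set)"
  shows "monomial (\<gamma>(b := \<gamma> b + 2)) x = (x \<bullet> b) ^ 2 * monomial \<gamma> x"
  using assms by (simp add: mon_upd_remove mon_remove[of b] power_add power2_eq_square)

lemma inner_self_Basis: "(x::'a::euclidean_space) \<bullet> x = (\<Sum>b\<in>Basis. (x \<bullet> b) ^ 2)"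
  by (subst euclidean_inner) (simp add: power2_eq_square)

lemma DIV_mon:
  assumes b0: "b0 \<in> Basis"
  shows "\<alpha> \<in> monomials d \<Longrightarrow> DIV b0 d (monomial \<alpha>)"
proof (induction "\<alpha> b0" arbitrary: \<alpha> rule: less_induct)
  case less
  note a = less.prems
  show ?case
  proof (cases "\<alpha> b0 = 0")
    case True
    have bf: "bfree b0 (monomial \<alpha>)" by (rule bfree_mon[of b0 \<alpha>, OF b0 True])
    show ?thesis unfolding DIV_def
      by (rule exI[of _ "\<lambda>x. 0"], rule exI[of _ "\<lambda>x. 0"], rule exI[of _ "monomial \<alpha>"])
        (simp add: hp_zero bfree_zero hp_mon[OF a] bf)
  next
    case False
    show ?thesis
    proof (cases "\<alpha> b0 = 1")
      case True
      define \<beta> where "\<beta> = \<alpha>(b0 := 0)"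
      have "(\<Sum>j\<in>Basis. \<beta> j) + \<alpha> b0 = (\<Sum>j\<in>Basis. \<alpha> j) + 0"
        unfolding \<beta>_def by (rule sum_fun_upd_Basis[OF b0])
      then have "(\<Sum>j\<in>Basis. \<beta> j) = d - 1" using True monomials_sum[OF a] by linarith
      then have bm: "\<beta> \<in> monomials (d - 1)" using a b0 unfolding monomials_def \<beta>_def by auto
      have eq: "monomial \<alpha> x = (x \<bullet> b0) * monomial \<beta> x" for x
        unfolding \<beta>_def using b0 True by (simp add: mon_upd_remove mon_remove[of b0])
      have bb: "\<beta> b0 = 0" unfolding \<beta>_def by simp
      show ?thesis unfolding DIV_def
        by (rule exI[of _ "\<lambda>x. 0"], rule exI[of _ "monomial \<beta>"], rule exI[of _ "\<lambda>x. 0"], intro conjI allI,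
          rule hp_zero, rule hp_mon[OF bm], rule hp_zero, rule bfree_mon[of b0 \<beta>, OF b0 bb], rule bfree_zero)
          (simp add: eq)
    next
      case False2: False
      then have ge: "\<alpha> b0 \<ge> 2" using False by auto
      define \<beta> where "\<beta> = \<alpha>(b0 := \<alpha> b0 - Suc (Suc 0))"
      have bm: "\<beta> \<in> monomials (d - 2)" unfolding \<beta>_def by (rule monomials_sub2[OF a b0 ge])
      define \<gamma> where "\<gamma> b = \<beta>(b := \<beta> b + 2)" for b
      have gm: "\<gamma> b \<in> monomials d" if b: "b \<in> Basis" for b
      proof -
        have "(\<Sum>j\<in>Basis. \<gamma> b j) + \<beta> b = (\<Sum>j\<in>Basis. \<beta> j) + (\<beta> b + 2)"
          unfolding \<gamma>_def by (rule sum_fun_upd_Basis[OF b])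
        moreover have "d \<ge> 2" using member_le_sum[of b0 Basis \<alpha>] b0 ge monomials_sum[OF a] by auto
        ultimately have "(\<Sum>j\<in>Basis. \<gamma> b j) = d" using monomials_sum[OF bm]
          by linarith
        then show ?thesis using bm b unfolding monomials_def \<gamma>_def by auto
      qed
      have IH: "DIV b0 d (monomial (\<gamma> b))" if b: "b \<in> Basis - {b0}" for b
      proof (rule less.hyps)
        show "\<gamma> b b0 < \<alpha> b0" using b ge unfolding \<gamma>_def \<beta>_def by auto
        show "\<gamma> b \<in> monomials d" using gm b by auto
      qed
      have aeq: "\<alpha> = \<beta>(b0 := \<beta> b0 + 2)" unfolding \<beta>_def using ge by (auto simp: fun_eq_iff)
      have eq: "monomial \<alpha> x = (x \<bullet> x) * monomial \<beta> x + (x \<bullet> b0) * 0 + (- 1) * (\<Sum>b\<in>Basis - {b0}. monomial (\<gamma> b) x)" for x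
      proof -
        have "(x \<bullet> x) * monomial \<beta> x = (\<Sum>b\<in>Basis. (x \<bullet> b) ^ 2 * monomial \<beta> x)"
          by (simp add: inner_self_Basis sum_distrib_right)
        also have "\<dots> = (x \<bullet> b0) ^ 2 * monomial \<beta> x + (\<Sum>b\<in>Basis - {b0}. (x \<bullet> b) ^ 2 * monomial \<beta> x)"
          using b0 by (simp add: sum.remove)
        also have "\<dots> = monomial \<alpha> x + (\<Sum>b\<in>Basis - {b0}. monomial (\<gamma> b) x)"
        proof -
          have m0: "monomial \<alpha> x = (x \<bullet> b0) ^ 2 * monomial \<beta> x" unfolding aeq by (rule mon_add2[OF b0])
          have "(\<Sum>b\<in>Basis - {b0}. (x \<bullet> b) ^ 2 * monomial \<beta> x) = (\<Sum>b\<in>Basis - {b0}. monomial (\<gamma> b) x)"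
            unfolding \<gamma>_def by (rule sum.cong[OF refl], rule mon_add2[symmetric]) auto
          then show ?thesis unfolding m0 by simp
        qed
        finally show ?thesis by simp
      qed
      obtain Q A B where QAB: "homogeneous_poly (d - 2) Q" "homogeneous_poly (d - 1) A" "homogeneous_poly d B"
        "bfree b0 A" "bfree b0 B" "\<forall>x. (\<Sum>b\<in>Basis - {b0}. monomial (\<gamma> b) x) = (x \<bullet> x) * Q x + (x \<bullet> b0) * A x + B x"
        using DIV_sum[of "Basis - {b0}" b0 d "\<lambda>b. monomial (\<gamma> b)", OF _ IH] unfolding DIV_def by auto
      show ?thesis unfolding DIV_def
      proof (rule exI[of _ "\<lambda>x. monomial \<beta> x + (- 1) * Q x"], rule exI[of _ "\<lambda>x. (- 1) * A x"], rule exI[of _ "\<lambda>x. (- 1) * B x"], intro conjI allI)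
        show "homogeneous_poly (d - 2) (\<lambda>x. monomial \<beta> x + - 1 * Q x)"
          by (rule hp_add[OF hp_mon[OF bm] hp_scale[OF QAB(1)]])
        show "homogeneous_poly (d - 1) (\<lambda>x. - 1 * A x)" by (rule hp_scale[OF QAB(2)])
        show "homogeneous_poly d (\<lambda>x. - 1 * B x)" by (rule hp_scale[OF QAB(3)])
        show "bfree b0 (\<lambda>x. - 1 * A x)" by (rule bfree_scale[OF QAB(4)])
        show "bfree b0 (\<lambda>x. - 1 * B x)" by (rule bfree_scale[OF QAB(5)])
        fix x
        show "monomial \<alpha> x = x \<bullet> x * (monomial \<beta> x + - 1 * Q x) + x \<bullet> b0 * (- 1 * A x) + - 1 * B x"
          unfolding eq QAB(6)[rule_format] by (simp add: algebra_simps)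
      qed
    qed
  qed
qed

lemma hp_DIV:
  assumes b0: "b0 \<in> Basis" and f: "homogeneous_poly d (f :: 'a::euclidean_space \<Rightarrow> real)"
  shows "DIV b0 d f"
proof -
  obtain c where c: "\<And>x. f x = (\<Sum>\<alpha>\<in>monomials d. c \<alpha> * monomial \<alpha> x)"
    using f unfolding homogeneous_poly_def by blast
  have "DIV b0 d (\<lambda>x. \<Sum>\<alpha>\<in>monomials d. c \<alpha> * monomial \<alpha> x)"
    by (rule DIV_sum[OF finite_monomials DIV_scale[OF DIV_mon[OF b0]]])
  then show ?thesis using c by (rule DIV_cong)
qed

abbreviation cpoly :: "real poly \<Rightarrow> complex poly" where "cpoly p \<equiv> map_poly complex_of_real p"

lemma cpoly_add: "cpoly (p + q) = cpoly p + cpoly q"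
  by (rule poly_eqI) (simp add: coeff_map_poly)

lemma cpoly_mult: "cpoly (p * q) = cpoly p * cpoly q"
  by (rule poly_eqI) (simp add: coeff_map_poly coeff_mult)

lemma cpoly_power: "cpoly (p ^ n) = cpoly p ^ n"
  by (induction n) (simp_all add: cpoly_mult)

definition evq :: "real \<Rightarrow> real poly \<Rightarrow> complex" where
  "evq q P = poly (cpoly P) (\<i> * complex_of_real (sqrt q))"

lemma evq_add: "evq q (P + Q) = evq q P + evq q Q"
  unfolding evq_def cpoly_add by simp

lemma evq_mult: "evq q (P * Q) = evq q P * evq q Q"
  unfolding evq_def cpoly_mult by simp

lemma evq_power: "evq q (P ^ n) = evq q P ^ n"
  unfolding evq_def cpoly_power by (simp add: poly_power)

lemma evq_pi: "q \<ge> 0 \<Longrightarrow> evq q [:q, 0, 1:] = 0"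
proof -
  assume q: "q \<ge> 0"
  have "(complex_of_real (sqrt q))^2 = complex_of_real q"
    using q by (simp flip: of_real_power)
  then show ?thesis unfolding evq_def by (simp add: map_poly_pCons power2_eq_square algebra_simps)
qed

lemma evq_lin: "evq q [:c0, c1:] = complex_of_real c0 + \<i> * complex_of_real (sqrt q * c1)"
  unfolding evq_def by (simp add: map_poly_pCons algebra_simps)

lemma evq_lin_zero:
  assumes "q > 0" "evq q [:c0, c1:] = 0" shows "c0 = 0 \<and> c1 = 0"
proof -
  have "Re (evq q [:c0, c1:]) = c0" "Im (evq q [:c0, c1:]) = sqrt q * c1"
    unfolding evq_lin by simp_all
  then show ?thesis using assms by simp
qed

lemma deg1_poly: "degree (R :: real poly) \<le> 1 \<Longrightarrow> R = [:coeff R 0, coeff R 1:]"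
proof (rule poly_eqI)
  fix n assume d: "degree R \<le> 1"
  show "coeff R n = coeff [:coeff R 0, coeff R 1:] n"
  proof (cases n)
    case 0 then show ?thesis by simp
  next
    case (Suc m) then show ?thesis using d by (cases m) (auto simp: coeff_eq_0)
  qed
qed

lemma evq_dvd:
  assumes q: "q > 0" and e: "evq q P = 0"
  shows "[:q, 0, 1:] dvd P"
proof -
  define \<pi> where "\<pi> = [:q, 0, (1::real):]"
  have pnz: "\<pi> \<noteq> 0" and dp: "degree \<pi> = 2" unfolding \<pi>_def by auto
  define R where "R = P mod \<pi>"
  have "P = (P div \<pi>) * \<pi> + R" unfolding R_def by simp
  then have "evq q P = evq q (P div \<pi>) * evq q \<pi> + evq q R" by (metis evq_add evq_mult)
  then have eR: "evq q R = 0" using e evq_pi q unfolding \<pi>_def by simp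
  have "R = 0 \<or> degree R < 2" using degree_mod_less[OF pnz, of P] dp unfolding R_def by simp
  then have "degree R \<le> 1" by auto
  then have "R = [:coeff R 0, coeff R 1:]" by (rule deg1_poly)
  then have "coeff R 0 = 0 \<and> coeff R 1 = 0" using evq_lin_zero[OF q] eR by metis
  then have "R = 0" using \<open>R = [:coeff R 0, coeff R 1:]\<close> by simp
  then show ?thesis unfolding R_def \<pi>_def by (simp add: dvd_eq_mod_eq_0)
qed

lemma line_key:
  fixes q A B :: real and k :: nat and PG PH PF PQ :: "real poly"
  assumes q: "q > 0" and k: "k \<ge> 1"
    and PG: "degree PG \<le> 2 * k - 2"
    and id1: "[:q, 0, 1:] ^ k * PH = PG * PF"
    and id2: "PF = [:q, 0, 1:] * PQ + [:B, A:]"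
    and AB: "A \<noteq> 0 \<or> B \<noteq> 0"
  shows "PG = 0"
proof -
  define \<pi> where "\<pi> = [:q, 0, (1::real):]"
  have pnz: "\<pi> \<noteq> 0" and dp: "degree \<pi> = 2" unfolding \<pi>_def by auto
  have e\<pi>: "evq q \<pi> = 0" unfolding \<pi>_def using q by (simp add: evq_pi)
  have eF: "evq q PF \<noteq> 0"
  proof
    assume "evq q PF = 0"
    moreover have "evq q PF = evq q \<pi> * evq q PQ + evq q [:B, A:]"
      unfolding id2 \<pi>_def by (simp only: evq_add evq_mult)
    ultimately have "evq q [:B, A:] = 0" using e\<pi> by simp
    then show False using evq_lin_zero[OF q] AB by blast
  qed
  have "\<pi> ^ j dvd PG" if "j \<le> k" for j
    using that
  proof (induction j)
    case 0 then show ?case by simp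
  next
    case (Suc j)
    then obtain R where R: "PG = \<pi> ^ j * R" by (auto elim: dvdE)
    have "\<pi> ^ j * (\<pi> ^ (k - j) * PH) = \<pi> ^ j * (R * PF)"
      using id1 unfolding R \<pi>_def[symmetric] using Suc.prems
      by (simp add: power_add[symmetric] mult_ac)
    then have "\<pi> ^ (k - j) * PH = R * PF" using pnz by simp
    then have "evq q \<pi> ^ (k - j) * evq q PH = evq q R * evq q PF" by (metis evq_mult evq_power)
    moreover have "(0::complex) ^ (k - j) = 0" using Suc.prems by simp
    ultimately have "evq q R * evq q PF = 0" using e\<pi> by simp
    then have "evq q R = 0" using eF by simp
    then have "\<pi> dvd R" using evq_dvd[OF q] unfolding \<pi>_def by blast
    then show ?case unfolding R by (simp add: mult_dvd_mono)
  qed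
  then have "\<pi> ^ k dvd PG" by simp
  show ?thesis
  proof (rule ccontr)
    assume "PG \<noteq> 0"
    then have "degree (\<pi> ^ k) \<le> degree PG" using \<open>\<pi> ^ k dvd PG\<close> by (rule dvd_imp_degree_le[rotated])
    then have "k * 2 \<le> 2 * k - 2" using degree_power_eq[OF pnz, of k] dp PG by simp
    then show False using k by simp
  qed
qed

lemma form_homog:
  assumes "is_form d (F :: 'a::euclidean_space \<Rightarrow> 'b::euclidean_space)"
  shows "F (t *\<^sub>R x) = t ^ d *\<^sub>R F x"
proof (rule euclidean_eqI)
  fix b :: 'b assume b: "b \<in> Basis"
  then have "homogeneous_poly d (\<lambda>x. F x \<bullet> b)" using assms unfolding is_form_def by blast
  from hp_homog[OF this] show "F (t *\<^sub>R x) \<bullet> b = (t ^ d *\<^sub>R F x) \<bullet> b" by simp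
qed

lemma hp_cont:
  assumes "homogeneous_poly d (f :: 'a::euclidean_space \<Rightarrow> real)"
  shows "continuous_on UNIV f"
proof -
  obtain c where c: "\<And>x. f x = (\<Sum>\<alpha>\<in>monomials d. c \<alpha> * monomial \<alpha> x)"
    using assms unfolding homogeneous_poly_def by blast
  have "continuous_on UNIV (\<lambda>x. \<Sum>\<alpha>\<in>monomials d. c \<alpha> * monomial \<alpha> x)"
    unfolding monomial_def by (intro continuous_intros)
  moreover have "f = (\<lambda>x. \<Sum>\<alpha>\<in>monomials d. c \<alpha> * monomial \<alpha> x)" using c by (rule ext)
  ultimately show ?thesis by simp
qed

lemma bchoice3: "\<forall>a\<in>S. \<exists>x y z. P a x y z \<Longrightarrow> \<exists>X Y Z. \<forall>a\<in>S. P a (X a) (Y a) (Z a)"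
proof -
  assume "\<forall>a\<in>S. \<exists>x y z. P a x y z"
  then have "\<forall>a\<in>S. \<exists>t. P a (fst t) (fst (snd t)) (snd (snd t))" by force
  then obtain T where T0: "\<forall>a\<in>S. P a (fst (T a)) (fst (snd (T a))) (snd (snd (T a)))" by (metis bchoice)
  show ?thesis
    by (rule exI[of _ "\<lambda>a. fst (T a)"], rule exI[of _ "\<lambda>a. fst (snd (T a))"], rule exI[of _ "\<lambda>a. snd (snd (T a))"])
      (use T0 in simp)
qed

lemma main_alg:
  fixes F :: "'a::euclidean_space \<Rightarrow> 'b::euclidean_space" and H :: "'a \<Rightarrow> 'b"
  assumes dim: "DIM('a) \<ge> 2" and k: "k \<ge> 2" and r: "r > 0"
    and F: "is_form k F" and H: "is_form (k - 2) H"
    and par: "\<forall>x\<in>sphere 0 1. H x = ((H x \<bullet> F x) / r\<^sup>2) *\<^sub>R F x"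
    and x0: "x0 \<in> sphere 0 1" "H x0 \<bullet> F x0 \<noteq> 0"
  shows "\<exists>G. is_form (k - 2) G \<and> (\<forall>x\<in>sphere 0 1. G x = F x)"
proof -
  define g where "g x = H x \<bullet> F x" for x
  have Fh: "F (t *\<^sub>R x) = t ^ k *\<^sub>R F x" for t x by (rule form_homog[OF F])
  have Hh: "H (t *\<^sub>R x) = t ^ (k - 2) *\<^sub>R H x" for t x by (rule form_homog[OF H])
  have S1: "(r\<^sup>2 * (x \<bullet> x) ^ k) *\<^sub>R H x = g x *\<^sub>R F x" for x
  proof (cases "x = 0")
    case True
    have "F 0 = 0" using Fh[of 0 0] k by (simp add: power_0_left)
    then show ?thesis using True k by (simp add: g_def)
  next
    case False
    define n where "n = norm x"
    have n: "n > 0" unfolding n_def using False by simp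
    define u where "u = (1 / n) *\<^sub>R x"
    have u: "norm u = 1" unfolding u_def n_def using False by simp
    have xu: "x = n *\<^sub>R u" unfolding u_def using n by simp
    have xx: "x \<bullet> x = n ^ 2" unfolding n_def by (simp add: power2_norm_eq_inner)
    have pu: "H u = (g u / r\<^sup>2) *\<^sub>R F u" using par u unfolding g_def by simp
    have Fx: "F x = n ^ k *\<^sub>R F u" using Fh xu by metis
    have gx: "g x = n ^ (k - 2) * n ^ k * g u" unfolding g_def xu Hh Fh by simp
    have "(r\<^sup>2 * (x \<bullet> x) ^ k) *\<^sub>R H x = (r\<^sup>2 * (n ^ 2) ^ k * n ^ (k - 2) * (g u / r\<^sup>2)) *\<^sub>R F u"
      unfolding xx unfolding xu Hh pu by simp
    also have "\<dots> = (n ^ (k - 2) * n ^ k * g u * n ^ k) *\<^sub>R F u"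
      using r by (simp add: power_mult[symmetric] mult_2_right power_add field_simps)
    also have "\<dots> = g x *\<^sub>R F x" unfolding gx Fx by simp
    finally show ?thesis .
  qed
  have S1b: "(x \<bullet> x) ^ k * (r\<^sup>2 * (H x \<bullet> a)) = g x * (F x \<bullet> a)" for x a
  proof -
    have "((r\<^sup>2 * (x \<bullet> x) ^ k) *\<^sub>R H x) \<bullet> a = (g x *\<^sub>R F x) \<bullet> a" using S1[of x] by simp
    then show ?thesis by (simp add: mult_ac)
  qed
  obtain b0 :: 'a where b0: "b0 \<in> Basis" using nonempty_Basis by blast
  have b0b0: "b0 \<bullet> b0 = 1" using b0 by simp
  have hpF: "homogeneous_poly k (\<lambda>x. F x \<bullet> a)" if "a \<in> Basis" for a
    using F that unfolding is_form_def by blast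
  have hpH: "homogeneous_poly (k - 2) (\<lambda>x. H x \<bullet> a)" if "a \<in> Basis" for a
    using H that unfolding is_form_def by blast
  have "\<forall>a\<in>Basis. \<exists>Q A B. homogeneous_poly (k - 2) Q \<and> homogeneous_poly (k - 1) A \<and> homogeneous_poly k B
      \<and> bfree b0 A \<and> bfree b0 B \<and> (\<forall>x. F x \<bullet> a = (x \<bullet> x) * Q x + (x \<bullet> b0) * A x + B x)"
    using hp_DIV[OF b0 hpF] unfolding DIV_def by blast
  then obtain Q A B where QAB: "\<forall>a\<in>Basis. homogeneous_poly (k - 2) (Q a) \<and> homogeneous_poly (k - 1) (A a) \<and> homogeneous_poly k (B a)
      \<and> bfree b0 (A a) \<and> bfree b0 (B a) \<and> (\<forall>x. F x \<bullet> a = (x \<bullet> x) * Q a x + (x \<bullet> b0) * A a x + B a x)"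
    using bchoice3[of Basis] by metis
  have LPg: "LP (2 * k - 2) g"
  proof -
    have "LP ((k - 2) + k) (\<lambda>x. \<Sum>a\<in>Basis. (H x \<bullet> a) * (F x \<bullet> a))"
      by (intro LP_sum finite_Basis LP_mult hp_LP hpH hpF)
    moreover have "(k - 2) + k = 2 * k - 2" using k by simp
    moreover have "g = (\<lambda>x. \<Sum>a\<in>Basis. (H x \<bullet> a) * (F x \<bullet> a))"
      unfolding g_def by (rule ext) (rule euclidean_inner)
    ultimately show ?thesis by simp
  qed
  have line: "A a y = 0 \<and> B a y = 0"
    if a: "a \<in> Basis" and y: "y \<bullet> b0 = 0" "y \<noteq> 0" and t0: "g (y + t0 *\<^sub>R b0) \<noteq> 0" for a y t0
  proof (rule ccontr)
    assume AB: "\<not> (A a y = 0 \<and> B a y = 0)"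
    define q where "q = y \<bullet> y"
    have q: "q > 0" unfolding q_def using y by simp
    obtain PG where PG: "degree PG \<le> 2 * k - 2" "\<forall>t. g (y + t *\<^sub>R b0) = poly PG t"
      using LPg unfolding LP_def by blast
    obtain PH where PH: "\<forall>t. r\<^sup>2 * (H (y + t *\<^sub>R b0) \<bullet> a) = poly PH t"
      using hp_LP[OF hp_scale[OF hpH[OF a], of "r\<^sup>2"]] unfolding LP_def by blast
    obtain PF where PF: "\<forall>t. F (y + t *\<^sub>R b0) \<bullet> a = poly PF t"
      using hp_LP[OF hpF[OF a]] unfolding LP_def by blast
    obtain PQ where PQ: "\<forall>t. Q a (y + t *\<^sub>R b0) = poly PQ t"
      using hp_LP[of "k - 2" "Q a"] QAB a unfolding LP_def by blast
    have ll: "(y + t *\<^sub>R b0) \<bullet> (y + t *\<^sub>R b0) = q + t * t" for t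
      unfolding q_def using y(1) b0b0 by (simp add: inner_add_left inner_add_right inner_commute)
    have lb: "(y + t *\<^sub>R b0) \<bullet> b0 = t" for t
      using y(1) b0b0 by (simp add: inner_add_left)
    have Af: "A a (y + t *\<^sub>R b0) = A a y" "B a (y + t *\<^sub>R b0) = B a y" for t
      using QAB a unfolding bfree_def by blast+
    have ppi: "poly [:q, 0, 1:] t = q + t * t" for t by simp
    have id1: "[:q, 0, 1:] ^ k * PH = PG * PF"
    proof (rule poly_eq_poly_eq_iff[THEN iffD1], rule ext)
      fix t
      have "poly ([:q, 0, 1:] ^ k * PH) t = ((y + t *\<^sub>R b0) \<bullet> (y + t *\<^sub>R b0)) ^ k * (r\<^sup>2 * (H (y + t *\<^sub>R b0) \<bullet> a))"
        unfolding ll by (simp add: poly_power PH[rule_format, symmetric])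
      also have "\<dots> = g (y + t *\<^sub>R b0) * (F (y + t *\<^sub>R b0) \<bullet> a)" by (rule S1b)
      also have "\<dots> = poly (PG * PF) t" using PG(2) PF by simp
      finally show "poly ([:q, 0, 1:] ^ k * PH) t = poly (PG * PF) t" .
    qed
    have id2: "PF = [:q, 0, 1:] * PQ + [:B a y, A a y:]"
    proof (rule poly_eq_poly_eq_iff[THEN iffD1], rule ext)
      fix t
      have "poly PF t = F (y + t *\<^sub>R b0) \<bullet> a" using PF by simp
      also have "\<dots> = (q + t * t) * Q a (y + t *\<^sub>R b0) + t * A a y + B a y"
        using QAB a ll lb Af by metis
      also have "\<dots> = poly ([:q, 0, 1:] * PQ + [:B a y, A a y:]) t" using PQ by (simp add: algebra_simps)
      finally show "poly PF t = poly ([:q, 0, 1:] * PQ + [:B a y, A a y:]) t" .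
    qed
    have "PG = 0" by (rule line_key[OF q _ PG(1) id1 id2]) (use k AB in auto)
    then show False using PG(2) t0 by simp
  qed
  have contg: "continuous_on UNIV g"
  proof -
    have "continuous_on UNIV (\<lambda>x. \<Sum>a\<in>Basis. (H x \<bullet> a) * (F x \<bullet> a))"
    proof (rule continuous_on_sum, rule continuous_on_mult)
      fix a :: 'b assume a: "a \<in> Basis"
      show "continuous_on UNIV (\<lambda>x. H x \<bullet> a)" by (rule hp_cont[OF hpH[OF a]])
      show "continuous_on UNIV (\<lambda>x. F x \<bullet> a)" by (rule hp_cont[OF hpF[OF a]])
    qed
    moreover have "g = (\<lambda>x. \<Sum>a\<in>Basis. (H x \<bullet> a) * (F x \<bullet> a))"
      unfolding g_def by (rule ext) (rule euclidean_inner)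
    ultimately show ?thesis by simp
  qed
  define W where "W = {x. g x \<noteq> 0} \<inter> {x. x - (x \<bullet> b0) *\<^sub>R b0 \<noteq> 0}"
  have o1: "open {x. g x \<noteq> 0}"
    using open_Collect_neq[OF contg continuous_on_const[of UNIV 0]] by simp
  have c2: "continuous_on UNIV (\<lambda>x::'a. x - (x \<bullet> b0) *\<^sub>R b0)" by (intro continuous_intros)
  have o2: "open {x. x - (x \<bullet> b0) *\<^sub>R b0 \<noteq> 0}"
    using open_Collect_neq[OF c2 continuous_on_const[of UNIV 0]] by simp
  have oW: "open W" unfolding W_def by (rule open_Int[OF o1 o2])
  have gx0: "g x0 \<noteq> 0" using x0 unfolding g_def by simp
  have Wne: "\<exists>w. w \<in> W"
  proof -
    obtain e where e: "e > 0" "ball x0 e \<subseteq> {x. g x \<noteq> 0}" using o1 gx0 openE by blast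
    have "Basis - {b0} \<noteq> {}"
    proof
      assume "Basis - {b0} = {}"
      then have bb: "(Basis :: 'a set) = {b0}" using b0 by auto
      have "card (Basis :: 'a set) = card {b0}" using bb by (rule arg_cong)
      then have "card (Basis :: 'a set) = 1" by simp
      then show False using dim by linarith
    qed
    then obtain c :: 'a where c: "c \<in> Basis" "c \<noteq> b0" by blast
    define x1 where "x1 = x0 + (e / 2) *\<^sub>R c"
    have "norm ((e / 2) *\<^sub>R c) = e / 2" using e c by simp
    then have "dist x0 x1 < e" unfolding x1_def dist_norm using e by simp
    then have "x1 \<in> ball x0 e" by simp
    then have gx1: "g x1 \<noteq> 0" using e(2) by blast
    show ?thesis
    proof (cases "x0 - (x0 \<bullet> b0) *\<^sub>R b0 = 0")
      case False then show ?thesis using gx0 unfolding W_def by blast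
    next
      case True
      have cb: "c \<bullet> b0 = 0" using c b0 by (simp add: inner_Basis)
      have "x1 - (x1 \<bullet> b0) *\<^sub>R b0 = (x0 - (x0 \<bullet> b0) *\<^sub>R b0) + (e / 2) *\<^sub>R c"
        unfolding x1_def using cb by (simp add: inner_add_left algebra_simps)
      also have "\<dots> = (e / 2) *\<^sub>R c" using True by simp
      finally have "x1 - (x1 \<bullet> b0) *\<^sub>R b0 \<noteq> 0" using e c by auto
      then show ?thesis using gx1 unfolding W_def by blast
    qed
  qed
  then obtain w where w: "w \<in> W" by blast
  have ABW: "A a x = 0 \<and> B a x = 0" if a: "a \<in> Basis" and x: "x \<in> W" for a x
  proof -
    define y where "y = x - (x \<bullet> b0) *\<^sub>R b0"
    have y: "y \<bullet> b0 = 0" "y \<noteq> 0" using x b0b0 unfolding y_def W_def by (auto simp: inner_diff_left)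
    have xy: "x = y + (x \<bullet> b0) *\<^sub>R b0" unfolding y_def by simp
    have "g (y + (x \<bullet> b0) *\<^sub>R b0) \<noteq> 0" using x xy unfolding W_def by auto
    then have "A a y = 0 \<and> B a y = 0" by (rule line[OF a y])
    moreover have "bfree b0 (A a)" "bfree b0 (B a)" using QAB a by blast+
    then have "A a (y + (x \<bullet> b0) *\<^sub>R b0) = A a y" "B a (y + (x \<bullet> b0) *\<^sub>R b0) = B a y"
      unfolding bfree_def by blast+
    then have "A a x = A a y" "B a x = B a y" using xy by simp_all
    ultimately show ?thesis by simp
  qed
  have AB0: "A a x = 0 \<and> B a x = 0" if a: "a \<in> Basis" for a x
  proof
    have hA: "homogeneous_poly (k - 1) (A a)" and hB: "homogeneous_poly k (B a)" using QAB a by blast+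
    have zA: "\<forall>x\<in>W. A a x = 0" and zB: "\<forall>x\<in>W. B a x = 0" using ABW[OF a] by blast+
    show "A a x = 0" by (rule LP_zero_open[OF hp_LP[OF hA] oW w zA])
    show "B a x = 0" by (rule LP_zero_open[OF hp_LP[OF hB] oW w zB])
  qed
  define G where "G x = (\<Sum>a\<in>Basis. Q a x *\<^sub>R a)" for x
  have Ga: "G x \<bullet> a = Q a x" if "a \<in> Basis" for x a
  proof -
    have "G x \<bullet> a = (\<Sum>b\<in>Basis. if b = a then Q b x else 0)"
      unfolding G_def inner_sum_left by (rule sum.cong) (auto simp: inner_Basis that)
    then show ?thesis using that by simp
  qed
  have "is_form (k - 2) G"
    unfolding is_form_def
  proof (intro ballI)
    fix a :: 'b assume a: "a \<in> Basis"
    have "homogeneous_poly (k - 2) (Q a)" using QAB a by blast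
    then show "homogeneous_poly (k - 2) (\<lambda>x. G x \<bullet> a)" by (rule hp_cong) (simp add: Ga[OF a])
  qed
  moreover have "G x = F x" if x: "x \<in> sphere 0 1" for x
  proof (rule euclidean_eqI)
    fix a :: 'b assume a: "a \<in> Basis"
    have xx: "x \<bullet> x = 1" using x by (simp add: power2_norm_eq_inner[symmetric])
    show "G x \<bullet> a = F x \<bullet> a" using QAB a AB0[OF a, of x] xx Ga[OF a] by simp
  qed
  ultimately show ?thesis by blast
qed

lemma sum_pair: "finite A \<Longrightarrow> (\<Sum>e\<in>A. (f e, g e)) = (\<Sum>e\<in>A. f e, \<Sum>e\<in>A. g e)"
  by (induction A rule: finite_induct) (simp_all add: zero_prod_def)

lemma single_harmonic:
  fixes F :: "'a::euclidean_space \<Rightarrow> 'b::euclidean_space" and H :: "'a \<Rightarrow> 'b"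
  assumes dim: "DIM('a) \<ge> 2" and k: "k \<ge> 1" and r: "r > 0"
    and F: "is_form k F" and mini: "minimal_degree_form k F" and harm: "harmonic_sphere_map r F"
    and H: "is_form (k - 2) H" and H0: "k \<le> 1 \<Longrightarrow> \<forall>y. H y = 0"
    and SL: "\<And>x. norm x = 1 \<Longrightarrow> sphere_laplacian F x = H x - c x *\<^sub>R F x"
  shows "\<forall>x\<in>sphere 0 1. H x = 0"
proof -
  have par: "H x = ((H x \<bullet> F x) / r\<^sup>2) *\<^sub>R F x" if x: "x \<in> sphere 0 1" for x
  proof -
    have nF: "F x \<bullet> F x = r\<^sup>2" using harm x unfolding harmonic_sphere_map_def
      by (simp add: power2_norm_eq_inner[symmetric])
    have "tension_field F x = 0" using harm x unfolding harmonic_sphere_map_def by blast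
    moreover have "norm x = 1" using x by simp
    ultimately have e1: "(H x - c x *\<^sub>R F x) - (((H x - c x *\<^sub>R F x) \<bullet> F x) / (F x \<bullet> F x)) *\<^sub>R F x = 0"
      unfolding tension_field_def Let_def using SL by simp
    have e2: "((H x - c x *\<^sub>R F x) \<bullet> F x) / (F x \<bullet> F x) = (H x \<bullet> F x) / r\<^sup>2 - c x"
      using nF r by (simp add: inner_diff_left field_simps)
    have "(H x - c x *\<^sub>R F x) - ((H x \<bullet> F x) / r\<^sup>2 - c x) *\<^sub>R F x = 0"
      using e1 unfolding e2 .
    then have "H x - ((H x \<bullet> F x) / r\<^sup>2) *\<^sub>R F x = 0" by (simp add: scaleR_diff_left)
    then show ?thesis by simp
  qed
  show ?thesis
  proof (cases "k \<le> 1")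
    case True then show ?thesis using H0 by simp
  next
    case False
    then have k2: "k \<ge> 2" by simp
    have "H x \<bullet> F x = 0" if x: "x \<in> sphere 0 1" for x
    proof (rule ccontr)
      assume "H x \<bullet> F x \<noteq> 0"
      then obtain G where G: "is_form (k - 2) G" "\<forall>x\<in>sphere 0 1. G x = F x"
        using main_alg[OF dim k2 r F H _ x] par by blast
      moreover have "k - 2 < k" using k2 by simp
      ultimately show False using mini unfolding minimal_degree_form_def by blast
    qed
    then show ?thesis using par by simp
  qed
qed

lemma lam_inj:
  fixes N :: real
  assumes "k1 \<ge> 1" "k2 \<ge> 1" "N \<ge> 0"
    and eq: "real k1 * (real k1 - 1) + N * real k1 = real k2 * (real k2 - 1) + N * real k2"
  shows "k1 = k2"
proof -
  have "(real k1 - real k2) * (real k1 + real k2 - 1 + N) =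
      (real k1 * (real k1 - 1) + N * real k1) - (real k2 * (real k2 - 1) + N * real k2)"
    by (simp add: algebra_simps)
  also have "\<dots> = 0" using eq by simp
  finally have "real k1 - real k2 = 0 \<or> real k1 + real k2 - 1 + N = 0" by simp
  moreover have "real k1 + real k2 - 1 + N > 0" using assms by simp
  ultimately show ?thesis by simp
qed

theorem mainTheorem5:
  fixes F1 :: "'a::euclidean_space \<Rightarrow> 'b::euclidean_space"
    and F2 :: "'a \<Rightarrow> 'c::euclidean_space"
    and k1 k2 :: nat and r1 r2 :: real
  assumes "DIM('a) \<ge> 2"
    and "k1 \<ge> 1" and "k2 \<ge> 1"
    and "r1 > 0" and "r2 > 0" and "r1\<^sup>2 + r2\<^sup>2 = 1"
    and "is_form k1 F1" and "is_form k2 F2"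
    and "\<forall>x. (norm (F1 x))\<^sup>2 = r1\<^sup>2 * norm x ^ (2 * k1)"
    and "\<forall>x. (norm (F2 x))\<^sup>2 = r2\<^sup>2 * norm x ^ (2 * k2)"
    and "minimal_degree_form k1 F1" and "minimal_degree_form k2 F2"
    and "harmonic_sphere_map r1 F1" and "harmonic_sphere_map r2 F2"
  shows "harmonic_sphere_map 1 (\<lambda>x. (F1 x, F2 x)) \<longleftrightarrow> k1 = k2"
proof -
  note A = assms
  obtain H1 where H1: "is_form (k1 - 2) H1" "k1 \<le> 1 \<Longrightarrow> \<forall>y. H1 y = 0"
    "\<And>x. norm x = 1 \<Longrightarrow> sphere_laplacian F1 x =
        H1 x - (real k1 * (real k1 - 1) + real (card (SOME B. tangent_onb x B)) * real k1) *\<^sub>R F1 x"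
    "\<And>x e. \<exists>d. curve2 (\<lambda>t. F1 (cos t *\<^sub>R x + sin t *\<^sub>R e)) d (geodesic_second_deriv F1 x e)"
    using form_lap[OF A(7)] by blast
  obtain H2 where H2: "is_form (k2 - 2) H2" "k2 \<le> 1 \<Longrightarrow> \<forall>y. H2 y = 0"
    "\<And>x. norm x = 1 \<Longrightarrow> sphere_laplacian F2 x =
        H2 x - (real k2 * (real k2 - 1) + real (card (SOME B. tangent_onb x B)) * real k2) *\<^sub>R F2 x"
    "\<And>x e. \<exists>d. curve2 (\<lambda>t. F2 (cos t *\<^sub>R x + sin t *\<^sub>R e)) d (geodesic_second_deriv F2 x e)"
    using form_lap[OF A(8)] by blast
  have Z1: "\<forall>x\<in>sphere 0 1. H1 x = 0"
    by (rule single_harmonic[OF A(1) A(2) A(4) A(7) A(11) A(13) H1(1) H1(2) H1(3)])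
  have Z2: "\<forall>x\<in>sphere 0 1. H2 x = 0"
    by (rule single_harmonic[OF A(1) A(3) A(5) A(8) A(12) A(14) H2(1) H2(2) H2(3)])
  define lam where "lam k x = real k * (real k - 1) + real (card (SOME B. tangent_onb x B)) * real k" for k :: nat and x :: 'a
  have nF1: "F1 x \<bullet> F1 x = r1\<^sup>2" if "x \<in> sphere 0 1" for x
    using A(9) that by (simp add: power2_norm_eq_inner[symmetric])
  have nF2: "F2 x \<bullet> F2 x = r2\<^sup>2" if "x \<in> sphere 0 1" for x
    using A(10) that by (simp add: power2_norm_eq_inner[symmetric])
  have SLP: "sphere_laplacian (\<lambda>y. (F1 y, F2 y)) x = (- (lam k1 x *\<^sub>R F1 x), - (lam k2 x *\<^sub>R F2 x))"
    if x: "x \<in> sphere 0 1" for x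
  proof -
    define B where "B = (SOME B. tangent_onb x B)"
    have T: "tangent_onb x B" unfolding B_def by (rule someI_ex[OF tangent_onb_exists])
    have fB: "finite B" using tangent_facts(1)[OF T] .
    have gp: "geodesic_second_deriv (\<lambda>y. (F1 y, F2 y)) x e = (geodesic_second_deriv F1 x e, geodesic_second_deriv F2 x e)" for e
    proof -
      obtain d1 d2 where "curve2 (\<lambda>t. F1 (cos t *\<^sub>R x + sin t *\<^sub>R e)) d1 (geodesic_second_deriv F1 x e)"
        "curve2 (\<lambda>t. F2 (cos t *\<^sub>R x + sin t *\<^sub>R e)) d2 (geodesic_second_deriv F2 x e)"
        using H1(4) H2(4) by blast
      from curve2_vd[OF curve2_Pair[OF this]] show ?thesis unfolding geodesic_second_deriv_def .
    qed
    have "sphere_laplacian (\<lambda>y. (F1 y, F2 y)) x = (sphere_laplacian F1 x, sphere_laplacian F2 x)"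
      unfolding sphere_laplacian_def B_def[symmetric] gp using fB by (rule sum_pair)
    also have "\<dots> = (- (lam k1 x *\<^sub>R F1 x), - (lam k2 x *\<^sub>R F2 x))"
      using H1(3) H2(3) Z1 Z2 x unfolding lam_def by simp
    finally show ?thesis .
  qed
  have TF: "tension_field (\<lambda>y. (F1 y, F2 y)) x = 0 \<longleftrightarrow> lam k1 x = lam k2 x" if x: "x \<in> sphere 0 1" for x
  proof -
    have yy: "(F1 x, F2 x) \<bullet> (F1 x, F2 x) = 1" using nF1[OF x] nF2[OF x] A(6) by simp
    define c where "c = lam k1 x * r1\<^sup>2 + lam k2 x * r2\<^sup>2"
    have vy: "(- (lam k1 x *\<^sub>R F1 x), - (lam k2 x *\<^sub>R F2 x)) \<bullet> (F1 x, F2 x) = - c"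
      unfolding c_def using nF1[OF x] nF2[OF x] by simp
    have tf: "tension_field (\<lambda>y. (F1 y, F2 y)) x = (((lam k2 x - lam k1 x) * r2\<^sup>2) *\<^sub>R F1 x, ((lam k1 x - lam k2 x) * r1\<^sup>2) *\<^sub>R F2 x)"
    proof -
      have "tension_field (\<lambda>y. (F1 y, F2 y)) x = (- (lam k1 x *\<^sub>R F1 x), - (lam k2 x *\<^sub>R F2 x)) - (- c) *\<^sub>R (F1 x, F2 x)"
        unfolding tension_field_def Let_def SLP[OF x] vy yy by simp
      also have "\<dots> = ((c - lam k1 x) *\<^sub>R F1 x, (c - lam k2 x) *\<^sub>R F2 x)" by (simp add: algebra_simps)
      also have "c - lam k1 x = (lam k2 x - lam k1 x) * r2\<^sup>2"
      proof -
        have "c - lam k1 x = c - lam k1 x * (r1\<^sup>2 + r2\<^sup>2)" using A(6) by simp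
        also have "\<dots> = (lam k2 x - lam k1 x) * r2\<^sup>2" unfolding c_def by (simp add: algebra_simps)
        finally show ?thesis .
      qed
      also have "c - lam k2 x = (lam k1 x - lam k2 x) * r1\<^sup>2"
      proof -
        have "c - lam k2 x = c - lam k2 x * (r1\<^sup>2 + r2\<^sup>2)" using A(6) by simp
        also have "\<dots> = (lam k1 x - lam k2 x) * r1\<^sup>2" unfolding c_def by (simp add: algebra_simps)
        finally show ?thesis .
      qed
      finally show ?thesis .
    qed
    have F1nz: "F1 x \<noteq> 0" using nF1[OF x] A(4) by auto
    have F2nz: "F2 x \<noteq> 0" using nF2[OF x] A(5) by auto
    show ?thesis unfolding tf using F1nz F2nz A(4) A(5) by (auto simp: zero_prod_def)
  qed
  have lamN: "lam k1 x = lam k2 x \<longleftrightarrow> k1 = k2" for x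
  proof
    assume "lam k1 x = lam k2 x"
    then show "k1 = k2" unfolding lam_def by (rule lam_inj[OF A(2) A(3), rotated]) simp
  qed simp
  have sph: "(F1 x, F2 x) \<in> sphere 0 1" if x: "x \<in> sphere 0 1" for x
  proof -
    have "(F1 x, F2 x) \<bullet> (F1 x, F2 x) = 1" using nF1[OF x] nF2[OF x] A(6) by simp
    then have "(norm (F1 x, F2 x))\<^sup>2 = 1" by (simp add: power2_norm_eq_inner)
    then have "norm (F1 x, F2 x) = 1 \<or> norm (F1 x, F2 x) = - 1" by (simp add: power2_eq_1_iff)
    moreover have "norm (F1 x, F2 x) \<ge> 0" by (rule norm_ge_zero)
    ultimately show ?thesis by auto
  qed
  obtain b0 :: 'a where b0: "b0 \<in> Basis" using nonempty_Basis by blast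
  have b0s: "b0 \<in> sphere 0 1" using b0 by simp
  show ?thesis
  proof
    assume "harmonic_sphere_map 1 (\<lambda>x. (F1 x, F2 x))"
    then have "tension_field (\<lambda>y. (F1 y, F2 y)) b0 = 0" using b0s unfolding harmonic_sphere_map_def by blast
    then show "k1 = k2" using TF[OF b0s] lamN by blast
  next
    assume "k1 = k2"
    then show "harmonic_sphere_map 1 (\<lambda>x. (F1 x, F2 x))"
      unfolding harmonic_sphere_map_def using TF lamN sph by blast
  qed
qed

end
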